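(* For any $\mathcal R$-dioid $K$ and $n\ge1$, $\mathrm{Mat}_{n\times n}(K)\simeq K\otimes_{\mathcal R}\mathrm{Mat}_{n\times n}(\mathbb B)$.
   Context: An $\mathcal R$-dioid is a dioid in which every regular subset of its multiplicative monoid has a supremum $\sum A$ with $\sum(AB)=(\sum A)(\sum B)$ (equivalently a $*$-continuous Kleene algebra); an $\mathcal R$-morphism is a dioid morphism preserving suprema of regular sets. $\mathrm{Mat}_{n\times n}(K)$ is the ($*$-continuous) Kleene algebra of $n\times n$ matrices over $K$ with matrix sum, product and standard matrix star; $\mathbb B=\{0,1\}$ is the boolean Kleene algebra. For $\mathcal R$-dioids $K_1,K_2$, $K_1\otimes_{\mathcal R}K_2$ is their tensor product: an $\mathcal R$-dioid with $\mathcal R$-morphisms from $K_1$ and $K_2$ whose images commute elementwise, universal in that every pair of elementwise commuting $\mathcal R$-morphisms from $K_1,K_2$ into an $\mathcal R$-dioid factors uniquely through an $\mathcal R$-morphism from the tensor product. *)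

theory Defs
  imports Main
begin

record 'a dioid_struct =
  dcar  :: "'a set"
  dadd  :: "'a \<Rightarrow> 'a \<Rightarrow> 'a"
  dmul  :: "'a \<Rightarrow> 'a \<Rightarrow> 'a"
  dzero :: 'a
  dunit :: 'a

definition is_dioid :: "'a dioid_struct \<Rightarrow> bool" where
  "is_dioid D \<longleftrightarrow>
     dzero D \<in> dcar D \<and> dunit D \<in> dcar D \<and>
     (\<forall>a\<in>dcar D. \<forall>b\<in>dcar D. dadd D a b \<in> dcar D \<and> dmul D a b \<in> dcar D) \<and>
     (\<forall>a\<in>dcar D. \<forall>b\<in>dcar D. \<forall>c\<in>dcar D.
        dadd D (dadd D a b) c = dadd D a (dadd D b c) \<and>
        dmul D (dmul D a b) c = dmul D a (dmul D b c) \<and>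
        dmul D a (dadd D b c) = dadd D (dmul D a b) (dmul D a c) \<and>
        dmul D (dadd D a b) c = dadd D (dmul D a c) (dmul D b c)) \<and>
     (\<forall>a\<in>dcar D. \<forall>b\<in>dcar D. dadd D a b = dadd D b a) \<and>
     (\<forall>a\<in>dcar D. dadd D a a = a \<and> dadd D (dzero D) a = a \<and>
        dmul D (dunit D) a = a \<and> dmul D a (dunit D) = a \<and>
        dmul D (dzero D) a = dzero D \<and> dmul D a (dzero D) = dzero D)"

definition dleq :: "'a dioid_struct \<Rightarrow> 'a \<Rightarrow> 'a \<Rightarrow> bool" where
  "dleq D a b \<longleftrightarrow> dadd D a b = b"

definition setmul :: "'a dioid_struct \<Rightarrow> 'a set \<Rightarrow> 'a set \<Rightarrow> 'a set" where
  "setmul D A B = {dmul D a b | a b. a \<in> A \<and> b \<in> B}"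

primrec setpow :: "'a dioid_struct \<Rightarrow> 'a set \<Rightarrow> nat \<Rightarrow> 'a set" where
  "setpow D A 0 = {dunit D}"
| "setpow D A (Suc k) = setmul D A (setpow D A k)"

definition setstar :: "'a dioid_struct \<Rightarrow> 'a set \<Rightarrow> 'a set" where
  "setstar D A = (\<Union>k. setpow D A k)"

inductive_set regsets :: "'a dioid_struct \<Rightarrow> 'a set set" for D where
  reg_empty: "{} \<in> regsets D"
| reg_single: "a \<in> dcar D \<Longrightarrow> {a} \<in> regsets D"
| reg_union: "A \<in> regsets D \<Longrightarrow> B \<in> regsets D \<Longrightarrow> A \<union> B \<in> regsets D"
| reg_mul: "A \<in> regsets D \<Longrightarrow> B \<in> regsets D \<Longrightarrow> setmul D A B \<in> regsets D"
| reg_star: "A \<in> regsets D \<Longrightarrow> setstar D A \<in> regsets D"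

definition is_sup :: "'a dioid_struct \<Rightarrow> 'a set \<Rightarrow> 'a \<Rightarrow> bool" where
  "is_sup D A s \<longleftrightarrow> s \<in> dcar D \<and> (\<forall>a\<in>A. dleq D a s) \<and>
     (\<forall>u\<in>dcar D. (\<forall>a\<in>A. dleq D a u) \<longrightarrow> dleq D s u)"

definition dsup :: "'a dioid_struct \<Rightarrow> 'a set \<Rightarrow> 'a" where
  "dsup D A = (THE s. is_sup D A s)"

definition R_dioid :: "'a dioid_struct \<Rightarrow> bool" where
  "R_dioid D \<longleftrightarrow> is_dioid D \<and>
     (\<forall>A\<in>regsets D. \<exists>s. is_sup D A s) \<and>
     (\<forall>A\<in>regsets D. \<forall>B\<in>regsets D.
        dsup D (setmul D A B) = dmul D (dsup D A) (dsup D B))"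

definition R_morphism :: "'a dioid_struct \<Rightarrow> 'b dioid_struct \<Rightarrow> ('a \<Rightarrow> 'b) \<Rightarrow> bool" where
  "R_morphism D E f \<longleftrightarrow>
     (\<forall>a\<in>dcar D. f a \<in> dcar E) \<and>
     f (dzero D) = dzero E \<and> f (dunit D) = dunit E \<and>
     (\<forall>a\<in>dcar D. \<forall>b\<in>dcar D. f (dadd D a b) = dadd E (f a) (f b) \<and>
                             f (dmul D a b) = dmul E (f a) (f b)) \<and>
     (\<forall>A\<in>regsets D. f (dsup D A) = dsup E (f ` A))"

text \<open>Tensor product by its universal property: T with maps i1 : K1 \<rightarrow> T, i2 : K2 \<rightarrow> T
  is a tensor product of K1 and K2 w.r.t. R-dioids of type 'c.\<close>
definition is_R_tensor ::
  "'a dioid_struct \<Rightarrow> 'b dioid_struct \<Rightarrow> 't dioid_struct \<Rightarrow> ('a \<Rightarrow> 't) \<Rightarrow> ('b \<Rightarrow> 't)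
     \<Rightarrow> 'c itself \<Rightarrow> bool" where
  "is_R_tensor K1 K2 T i1 i2 (_ :: 'c itself) \<longleftrightarrow>
     R_dioid T \<and> R_morphism K1 T i1 \<and> R_morphism K2 T i2 \<and>
     (\<forall>x\<in>dcar K1. \<forall>y\<in>dcar K2. dmul T (i1 x) (i2 y) = dmul T (i2 y) (i1 x)) \<and>
     (\<forall>(E :: 'c dioid_struct) f g.
        R_dioid E \<and> R_morphism K1 E f \<and> R_morphism K2 E g \<and>
        (\<forall>x\<in>dcar K1. \<forall>y\<in>dcar K2. dmul E (f x) (g y) = dmul E (g y) (f x)) \<longrightarrow>
        (\<exists>h. R_morphism T E h \<and> (\<forall>x\<in>dcar K1. h (i1 x) = f x) \<and>
             (\<forall>y\<in>dcar K2. h (i2 y) = g y) \<and>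
             (\<forall>h'. R_morphism T E h' \<and> (\<forall>x\<in>dcar K1. h' (i1 x) = f x) \<and>
                   (\<forall>y\<in>dcar K2. h' (i2 y) = g y) \<longrightarrow> (\<forall>z\<in>dcar T. h' z = h z))))"

primrec dsum :: "'a dioid_struct \<Rightarrow> (nat \<Rightarrow> 'a) \<Rightarrow> nat \<Rightarrow> 'a" where
  "dsum D f 0 = dzero D"
| "dsum D f (Suc k) = dadd D (dsum D f k) (f k)"

text \<open>n\<times>n matrices over K, represented as functions nat \<Rightarrow> nat \<Rightarrow> 'a that are
  zero outside the index range {0..<n}\<times>{0..<n}.\<close>
definition Mat :: "nat \<Rightarrow> 'a dioid_struct \<Rightarrow> (nat \<Rightarrow> nat \<Rightarrow> 'a) dioid_struct" where
  "Mat n K = \<lparr>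
     dcar = {M. (\<forall>i<n. \<forall>j<n. M i j \<in> dcar K) \<and> (\<forall>i j. \<not> (i < n \<and> j < n) \<longrightarrow> M i j = dzero K)},
     dadd = (\<lambda>M N i j. if i < n \<and> j < n then dadd K (M i j) (N i j) else dzero K),
     dmul = (\<lambda>M N i j. if i < n \<and> j < n then dsum K (\<lambda>k. dmul K (M i k) (N k j)) n else dzero K),
     dzero = (\<lambda>i j. dzero K),
     dunit = (\<lambda>i j. if i = j \<and> i < n then dunit K else dzero K) \<rparr>"

definition Bool_dioid :: "bool dioid_struct" where
  "Bool_dioid = \<lparr> dcar = UNIV, dadd = (\<or>), dmul = (\<and>), dzero = False, dunit = True \<rparr>"

definition scalar_mat :: "nat \<Rightarrow> 'a dioid_struct \<Rightarrow> 'a \<Rightarrow> (nat \<Rightarrow> nat \<Rightarrow> 'a)" where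
  "scalar_mat n K k = (\<lambda>i j. if i = j \<and> i < n then k else dzero K)"

definition bool_mat :: "nat \<Rightarrow> 'a dioid_struct \<Rightarrow> (nat \<Rightarrow> nat \<Rightarrow> bool) \<Rightarrow> (nat \<Rightarrow> nat \<Rightarrow> 'a)" where
  "bool_mat n K M = (\<lambda>i j. if i < n \<and> j < n \<and> M i j then dunit K else dzero K)"

end

theory Submission
  imports Defs
begin

locale dioid =
  fixes D :: "'a dioid_struct"
  assumes isd: "is_dioid D"
begin

lemma zero_c[simp]: "dzero D \<in> dcar D" using isd unfolding is_dioid_def by blast
lemma one_c[simp]: "dunit D \<in> dcar D" using isd unfolding is_dioid_def by blast
lemma add_c[simp]: "a \<in> dcar D \<Longrightarrow> b \<in> dcar D \<Longrightarrow> dadd D a b \<in> dcar D"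
  using isd unfolding is_dioid_def by blast
lemma mul_c[simp]: "a \<in> dcar D \<Longrightarrow> b \<in> dcar D \<Longrightarrow> dmul D a b \<in> dcar D"
  using isd unfolding is_dioid_def by blast
lemma add_assoc: "a \<in> dcar D \<Longrightarrow> b \<in> dcar D \<Longrightarrow> c \<in> dcar D \<Longrightarrow>
  dadd D (dadd D a b) c = dadd D a (dadd D b c)"
  using isd unfolding is_dioid_def by blast
lemma mul_assoc: "a \<in> dcar D \<Longrightarrow> b \<in> dcar D \<Longrightarrow> c \<in> dcar D \<Longrightarrow>
  dmul D (dmul D a b) c = dmul D a (dmul D b c)"
  using isd unfolding is_dioid_def by blast
lemma distl: "a \<in> dcar D \<Longrightarrow> b \<in> dcar D \<Longrightarrow> c \<in> dcar D \<Longrightarrow>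
  dmul D a (dadd D b c) = dadd D (dmul D a b) (dmul D a c)"
  using isd unfolding is_dioid_def by blast
lemma distr: "a \<in> dcar D \<Longrightarrow> b \<in> dcar D \<Longrightarrow> c \<in> dcar D \<Longrightarrow>
  dmul D (dadd D a b) c = dadd D (dmul D a c) (dmul D b c)"
  using isd unfolding is_dioid_def by blast
lemma add_comm: "a \<in> dcar D \<Longrightarrow> b \<in> dcar D \<Longrightarrow> dadd D a b = dadd D b a"
  using isd unfolding is_dioid_def by blast
lemma add_idem[simp]: "a \<in> dcar D \<Longrightarrow> dadd D a a = a"
  using isd unfolding is_dioid_def by blast
lemma add_zero_l[simp]: "a \<in> dcar D \<Longrightarrow> dadd D (dzero D) a = a"
  using isd unfolding is_dioid_def by blast
lemma add_zero_r[simp]: "a \<in> dcar D \<Longrightarrow> dadd D a (dzero D) = a"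
  using add_comm add_zero_l zero_c by metis
lemma mul_one_l[simp]: "a \<in> dcar D \<Longrightarrow> dmul D (dunit D) a = a"
  using isd unfolding is_dioid_def by blast
lemma mul_one_r[simp]: "a \<in> dcar D \<Longrightarrow> dmul D a (dunit D) = a"
  using isd unfolding is_dioid_def by blast
lemma mul_zero_l[simp]: "a \<in> dcar D \<Longrightarrow> dmul D (dzero D) a = dzero D"
  using isd unfolding is_dioid_def by blast
lemma mul_zero_r[simp]: "a \<in> dcar D \<Longrightarrow> dmul D a (dzero D) = dzero D"
  using isd unfolding is_dioid_def by blast

lemma add_lcomm: "a \<in> dcar D \<Longrightarrow> b \<in> dcar D \<Longrightarrow> c \<in> dcar D \<Longrightarrow>
  dadd D a (dadd D b c) = dadd D b (dadd D a c)"
proof -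
  assume h: "a \<in> dcar D" "b \<in> dcar D" "c \<in> dcar D"
  have "dadd D a (dadd D b c) = dadd D (dadd D a b) c" using h by (simp add: add_assoc)
  also have "\<dots> = dadd D (dadd D b a) c" using h add_comm[of a b] by simp
  also have "\<dots> = dadd D b (dadd D a c)" using h by (simp add: add_assoc)
  finally show ?thesis .
qed

lemma add_4: "a \<in> dcar D \<Longrightarrow> b \<in> dcar D \<Longrightarrow> c \<in> dcar D \<Longrightarrow> d \<in> dcar D \<Longrightarrow>
  dadd D (dadd D a b) (dadd D c d) = dadd D (dadd D a c) (dadd D b d)"
  by (simp add: add_assoc add_lcomm)

abbreviation le where "le a b \<equiv> dleq D a b"

lemma le_refl[simp]: "a \<in> dcar D \<Longrightarrow> le a a" unfolding dleq_def by simp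
lemma le_trans: "a \<in> dcar D \<Longrightarrow> b \<in> dcar D \<Longrightarrow> c \<in> dcar D \<Longrightarrow> le a b \<Longrightarrow> le b c \<Longrightarrow> le a c"
proof -
  assume h: "a \<in> dcar D" "b \<in> dcar D" "c \<in> dcar D" "le a b" "le b c"
  have "dadd D a c = dadd D a (dadd D b c)" using h(5) unfolding dleq_def by simp
  also have "\<dots> = dadd D (dadd D a b) c" using h by (simp add: add_assoc)
  also have "\<dots> = c" using h(4,5) unfolding dleq_def by simp
  finally show ?thesis unfolding dleq_def .
qed
lemma le_antisym: "a \<in> dcar D \<Longrightarrow> b \<in> dcar D \<Longrightarrow> le a b \<Longrightarrow> le b a \<Longrightarrow> a = b"
  unfolding dleq_def using add_comm[of a b] by simp
lemma le_add1: "a \<in> dcar D \<Longrightarrow> b \<in> dcar D \<Longrightarrow> le a (dadd D a b)"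
  unfolding dleq_def by (simp flip: add_assoc)
lemma le_add2: "a \<in> dcar D \<Longrightarrow> b \<in> dcar D \<Longrightarrow> le b (dadd D a b)"
  using add_comm[of a b] le_add1[of b a] by simp
lemma add_lub: "a \<in> dcar D \<Longrightarrow> b \<in> dcar D \<Longrightarrow> c \<in> dcar D \<Longrightarrow> le a c \<Longrightarrow> le b c \<Longrightarrow> le (dadd D a b) c"
proof -
  assume h: "a \<in> dcar D" "b \<in> dcar D" "c \<in> dcar D" "le a c" "le b c"
  have "dadd D (dadd D a b) c = dadd D a (dadd D b c)" using h by (simp add: add_assoc)
  also have "\<dots> = c" using h(4,5) unfolding dleq_def by simp
  finally show ?thesis unfolding dleq_def .
qed
lemma zero_le[simp]: "a \<in> dcar D \<Longrightarrow> le (dzero D) a"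
  unfolding dleq_def by simp
lemma add_mono: "a \<in> dcar D \<Longrightarrow> b \<in> dcar D \<Longrightarrow> c \<in> dcar D \<Longrightarrow> d \<in> dcar D \<Longrightarrow>
  le a c \<Longrightarrow> le b d \<Longrightarrow> le (dadd D a b) (dadd D c d)"
  unfolding dleq_def using add_4[of a b c d] by simp
lemma mul_mono_l: "a \<in> dcar D \<Longrightarrow> b \<in> dcar D \<Longrightarrow> c \<in> dcar D \<Longrightarrow> le a b \<Longrightarrow> le (dmul D c a) (dmul D c b)"
  unfolding dleq_def using distl[of c a b] by simp
lemma mul_mono_r: "a \<in> dcar D \<Longrightarrow> b \<in> dcar D \<Longrightarrow> c \<in> dcar D \<Longrightarrow> le a b \<Longrightarrow> le (dmul D a c) (dmul D b c)"
  unfolding dleq_def using distr[of a b c] by simp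
lemma mul_mono: "a \<in> dcar D \<Longrightarrow> b \<in> dcar D \<Longrightarrow> c \<in> dcar D \<Longrightarrow> d \<in> dcar D \<Longrightarrow>
  le a c \<Longrightarrow> le b d \<Longrightarrow> le (dmul D a b) (dmul D c d)"
proof -
  assume h: "a \<in> dcar D" "b \<in> dcar D" "c \<in> dcar D" "d \<in> dcar D" "le a c" "le b d"
  have "le (dmul D a b) (dmul D c b)" using h by (intro mul_mono_r) auto
  moreover have "le (dmul D c b) (dmul D c d)" using h by (intro mul_mono_l) auto
  ultimately show ?thesis using h le_trans[of "dmul D a b" "dmul D c b" "dmul D c d"] by simp
qed

lemma is_sup_unique: "is_sup D A s \<Longrightarrow> is_sup D A t \<Longrightarrow> s = t"
  unfolding is_sup_def using le_antisym by blast
lemma dsup_eq: "is_sup D A s \<Longrightarrow> dsup D A = s"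
  unfolding dsup_def using is_sup_unique by (intro the_equality) auto
lemma is_sup_ex: "is_sup D A s \<Longrightarrow> is_sup D A (dsup D A)"
  using dsup_eq by simp
lemma is_sup_mono: "A \<subseteq> B \<Longrightarrow> is_sup D A a \<Longrightarrow> is_sup D B b \<Longrightarrow> le a b"
  unfolding is_sup_def by blast
lemma is_sup_empty: "is_sup D {} (dzero D)"
  unfolding is_sup_def by simp
lemma is_sup_single: "a \<in> dcar D \<Longrightarrow> is_sup D {a} a"
  unfolding is_sup_def by simp
lemma is_sup_union: "A \<subseteq> dcar D \<Longrightarrow> B \<subseteq> dcar D \<Longrightarrow>
  is_sup D A a \<Longrightarrow> is_sup D B b \<Longrightarrow> is_sup D (A \<union> B) (dadd D a b)"
  unfolding is_sup_def
proof (intro conjI ballI impI)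
  assume h: "A \<subseteq> dcar D" "B \<subseteq> dcar D"
    "a \<in> dcar D \<and> (\<forall>x\<in>A. le x a) \<and> (\<forall>u\<in>dcar D. (\<forall>x\<in>A. le x u) \<longrightarrow> le a u)"
    "b \<in> dcar D \<and> (\<forall>x\<in>B. le x b) \<and> (\<forall>u\<in>dcar D. (\<forall>x\<in>B. le x u) \<longrightarrow> le b u)"
  then show "dadd D a b \<in> dcar D" by simp
  fix x assume "x \<in> A \<union> B"
  then show "le x (dadd D a b)"
  proof
    assume x: "x \<in> A"
    then have "x \<in> dcar D" "le x a" "a \<in> dcar D" "b \<in> dcar D" using h by auto
    then show ?thesis using le_trans[of x a "dadd D a b"] le_add1[of a b] by simp
  next
    assume x: "x \<in> B"
    then have "x \<in> dcar D" "le x b" "a \<in> dcar D" "b \<in> dcar D" using h by auto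
    then show ?thesis using le_trans[of x b "dadd D a b"] le_add2[of a b] by simp
  qed
next
  fix u assume h: "A \<subseteq> dcar D" "B \<subseteq> dcar D"
    "a \<in> dcar D \<and> (\<forall>x\<in>A. le x a) \<and> (\<forall>u\<in>dcar D. (\<forall>x\<in>A. le x u) \<longrightarrow> le a u)"
    "b \<in> dcar D \<and> (\<forall>x\<in>B. le x b) \<and> (\<forall>u\<in>dcar D. (\<forall>x\<in>B. le x u) \<longrightarrow> le b u)"
    "u \<in> dcar D" "\<forall>x\<in>A \<union> B. le x u"
  then have "le a u" "le b u" "a \<in> dcar D" "b \<in> dcar D" by auto
  then show "le (dadd D a b) u" using h(5) by (intro add_lub)
qed
lemma is_sup_upper: "is_sup D A s \<Longrightarrow> a \<in> A \<Longrightarrow> le a s"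
  unfolding is_sup_def by blast
lemma is_sup_least: "is_sup D A s \<Longrightarrow> u \<in> dcar D \<Longrightarrow> (\<And>a. a \<in> A \<Longrightarrow> le a u) \<Longrightarrow> le s u"
  unfolding is_sup_def by blast
lemma is_sup_car: "is_sup D A s \<Longrightarrow> s \<in> dcar D"
  unfolding is_sup_def by blast

lemma dsum_c[simp]: "(\<And>k. k < m \<Longrightarrow> f k \<in> dcar D) \<Longrightarrow> dsum D f m \<in> dcar D"
  by (induction m) auto
lemma dsum_cong: "(\<And>k. k < m \<Longrightarrow> f k = g k) \<Longrightarrow> dsum D f m = dsum D g m"
  by (induction m) auto
lemma dsum_zero[simp]: "dsum D (\<lambda>k. dzero D) m = dzero D"
  by (induction m) auto
lemma dsum_add: "(\<And>k. k < m \<Longrightarrow> f k \<in> dcar D) \<Longrightarrow> (\<And>k. k < m \<Longrightarrow> g k \<in> dcar D) \<Longrightarrow>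
   dsum D (\<lambda>k. dadd D (f k) (g k)) m = dadd D (dsum D f m) (dsum D g m)"
  by (induction m) (auto simp: add_4)
lemma dsum_mul_l: "a \<in> dcar D \<Longrightarrow> (\<And>k. k < m \<Longrightarrow> f k \<in> dcar D) \<Longrightarrow>
   dmul D a (dsum D f m) = dsum D (\<lambda>k. dmul D a (f k)) m"
  by (induction m) (auto simp: distl)
lemma dsum_mul_r: "a \<in> dcar D \<Longrightarrow> (\<And>k. k < m \<Longrightarrow> f k \<in> dcar D) \<Longrightarrow>
   dmul D (dsum D f m) a = dsum D (\<lambda>k. dmul D (f k) a) m"
  by (induction m) (auto simp: distr)
lemma dsum_swap: "(\<And>i j. i < m1 \<Longrightarrow> j < m2 \<Longrightarrow> f i j \<in> dcar D) \<Longrightarrow>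
   dsum D (\<lambda>i. dsum D (\<lambda>j. f i j) m2) m1 = dsum D (\<lambda>j. dsum D (\<lambda>i. f i j) m1) m2"
proof (induction m1)
  case 0
  then show ?case by simp
next
  case (Suc m1)
  have "dsum D (\<lambda>i. dsum D (f i) m2) (Suc m1) =
     dadd D (dsum D (\<lambda>j. dsum D (\<lambda>i. f i j) m1) m2) (dsum D (f m1) m2)"
    using Suc by simp
  also have "\<dots> = dsum D (\<lambda>j. dadd D (dsum D (\<lambda>i. f i j) m1) (f m1 j)) m2"
    using Suc.prems by (subst dsum_add) auto
  finally show ?case by simp
qed
lemma dsum_delta: "(\<And>k. k < m \<Longrightarrow> f k \<in> dcar D) \<Longrightarrow>
   dsum D (\<lambda>k. if k = j then f k else dzero D) m = (if j < m then f j else dzero D)"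
  by (induction m) auto
lemma dsum_delta': "(\<And>k. k < m \<Longrightarrow> f k \<in> dcar D) \<Longrightarrow>
   dsum D (\<lambda>k. if j = k then f k else dzero D) m = (if j < m then f j else dzero D)"
  using dsum_delta[of m f j] by (simp add: eq_commute)
lemma dsum_upper: "(\<And>k. k < m \<Longrightarrow> f k \<in> dcar D) \<Longrightarrow> k < m \<Longrightarrow> le (f k) (dsum D f m)"
proof (induction m)
  case 0 then show ?case by simp
next
  case (Suc m)
  show ?case
  proof (cases "k = m")
    case True then show ?thesis using Suc.prems by (simp add: le_add2)
  next
    case False
    then have "le (f k) (dsum D f m)" using Suc by auto
    then show ?thesis using Suc.prems le_trans[OF _ _ _ _ le_add1, of "f k" "dsum D f m" "f m"] by simp
  qed
qed
lemma dsum_lub: "(\<And>k. k < m \<Longrightarrow> f k \<in> dcar D) \<Longrightarrow> u \<in> dcar D \<Longrightarrow> (\<And>k. k < m \<Longrightarrow> le (f k) u) \<Longrightarrow>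
   le (dsum D f m) u"
  by (induction m) (auto intro: add_lub)
lemma dsum_mono: "(\<And>k. k < m \<Longrightarrow> f k \<in> dcar D) \<Longrightarrow> (\<And>k. k < m \<Longrightarrow> g k \<in> dcar D) \<Longrightarrow>
   (\<And>k. k < m \<Longrightarrow> le (f k) (g k)) \<Longrightarrow> le (dsum D f m) (dsum D g m)"
  by (induction m) (auto intro: add_mono)
lemma dsum_ind: "dsum D (\<lambda>k. if P k then dunit D else dzero D) m =
   (if \<exists>k<m. P k then dunit D else dzero D)"
  by (induction m) (auto simp: less_Suc_eq)

lemma is_sup_UN: "(\<And>k. k < m \<Longrightarrow> X k \<subseteq> dcar D) \<Longrightarrow> (\<And>k. k < m \<Longrightarrow> is_sup D (X k) (s k)) \<Longrightarrow> is_sup D (\<Union>k<m. X k) (dsum D s m)"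
proof (induction m)
  case 0 then show ?case by (simp add: is_sup_empty)
next
  case (Suc m)
  have "(\<Union>k<Suc m. X k) = (\<Union>k<m. X k) \<union> X m" by (auto simp: less_Suc_eq)
  moreover have "(\<Union>k<m. X k) \<subseteq> dcar D"
  proof (intro UN_least)
    fix k assume "k \<in> {..<m}" then show "X k \<subseteq> dcar D" using Suc.prems(1) by simp
  qed
  moreover have "is_sup D (\<Union>k<m. X k) (dsum D s m)" using Suc.IH Suc.prems by simp
  moreover have "is_sup D (X m) (s m)" "X m \<subseteq> dcar D" using Suc.prems by auto
  ultimately show ?case using is_sup_union[of "\<Union>k<m. X k" "X m" "dsum D s m" "s m"]
    by (simp only: dsum.simps)
qed

lemma setmul_c: "A \<subseteq> dcar D \<Longrightarrow> B \<subseteq> dcar D \<Longrightarrow> setmul D A B \<subseteq> dcar D"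
  unfolding setmul_def by (auto simp: subset_iff)
lemma setpow_c: "A \<subseteq> dcar D \<Longrightarrow> setpow D A k \<subseteq> dcar D"
  by (induction k) (auto intro: setmul_c[THEN subsetD])
lemma setstar_c: "A \<subseteq> dcar D \<Longrightarrow> setstar D A \<subseteq> dcar D"
  unfolding setstar_def using setpow_c by blast
lemma regsets_c: "X \<in> regsets D \<Longrightarrow> X \<subseteq> dcar D"
  by (erule regsets.induct) (auto intro: setmul_c[THEN subsetD] setstar_c[THEN subsetD])
lemma regsets_UN: "(\<And>k. k < (m::nat) \<Longrightarrow> X k \<in> regsets D) \<Longrightarrow> (\<Union>k<m. X k) \<in> regsets D"
proof (induction m)
  case 0 then show ?case by (simp add: reg_empty)
next
  case (Suc m)
  have "(\<Union>k<Suc m. X k) = (\<Union>k<m. X k) \<union> X m" by (auto simp: less_Suc_eq)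
  then show ?case using Suc by (simp add: reg_union)
qed
lemma setmul_mono: "A \<subseteq> A' \<Longrightarrow> B \<subseteq> B' \<Longrightarrow> setmul D A B \<subseteq> setmul D A' B'"
  unfolding setmul_def by blast
lemma setmul_assoc: "A \<subseteq> dcar D \<Longrightarrow> B \<subseteq> dcar D \<Longrightarrow> C \<subseteq> dcar D \<Longrightarrow>
  setmul D (setmul D A B) C = setmul D A (setmul D B C)"
proof
  assume h: "A \<subseteq> dcar D" "B \<subseteq> dcar D" "C \<subseteq> dcar D"
  show "setmul D (setmul D A B) C \<subseteq> setmul D A (setmul D B C)"
  proof
    fix z assume "z \<in> setmul D (setmul D A B) C"
    then obtain a b c where z: "z = dmul D (dmul D a b) c" and abc: "a \<in> A" "b \<in> B" "c \<in> C"
      unfolding setmul_def by blast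
    moreover have "a \<in> dcar D" "b \<in> dcar D" "c \<in> dcar D" using abc h by auto
    ultimately have "z = dmul D a (dmul D b c)" by (simp add: mul_assoc)
    then show "z \<in> setmul D A (setmul D B C)" using abc unfolding setmul_def by blast
  qed
  show "setmul D A (setmul D B C) \<subseteq> setmul D (setmul D A B) C"
  proof
    fix z assume "z \<in> setmul D A (setmul D B C)"
    then obtain a b c where z: "z = dmul D a (dmul D b c)" and abc: "a \<in> A" "b \<in> B" "c \<in> C"
      unfolding setmul_def by blast
    moreover have "a \<in> dcar D" "b \<in> dcar D" "c \<in> dcar D" using abc h by auto
    ultimately have "z = dmul D (dmul D a b) c" by (simp add: mul_assoc)
    then show "z \<in> setmul D (setmul D A B) C" using abc unfolding setmul_def by blast
  qed
qed
lemma setmul_one_l: "A \<subseteq> dcar D \<Longrightarrow> setmul D {dunit D} A = A"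
proof -
  assume h: "A \<subseteq> dcar D"
  have "x \<in> setmul D {dunit D} A \<longleftrightarrow> x \<in> A" for x
  proof
    assume "x \<in> setmul D {dunit D} A"
    then obtain b where "x = dmul D (dunit D) b" "b \<in> A" unfolding setmul_def by blast
    then show "x \<in> A" using h by auto
  next
    assume x: "x \<in> A"
    then have "x = dmul D (dunit D) x" using h by auto
    then show "x \<in> setmul D {dunit D} A" using x unfolding setmul_def by blast
  qed
  then show ?thesis by blast
qed
lemma setmul_one_r: "A \<subseteq> dcar D \<Longrightarrow> setmul D A {dunit D} = A"
proof -
  assume h: "A \<subseteq> dcar D"
  have "x \<in> setmul D A {dunit D} \<longleftrightarrow> x \<in> A" for x
  proof
    assume "x \<in> setmul D A {dunit D}"
    then obtain b where "x = dmul D b (dunit D)" "b \<in> A" unfolding setmul_def by blast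
    then show "x \<in> A" using h by auto
  next
    assume x: "x \<in> A"
    then have "x = dmul D x (dunit D)" using h by auto
    then show "x \<in> setmul D A {dunit D}" using x unfolding setmul_def by blast
  qed
  then show ?thesis by blast
qed
lemma setpow_setstar: "setpow D A k \<subseteq> setstar D A"
  unfolding setstar_def by blast
lemma setmul_star: "setmul D A (setstar D A) \<subseteq> setstar D A"
proof
  fix z assume "z \<in> setmul D A (setstar D A)"
  then obtain a b k where "z = dmul D a b" "a \<in> A" "b \<in> setpow D A k"
    unfolding setstar_def setmul_def by blast
  then have "z \<in> setpow D A (Suc k)" unfolding setpow.simps setmul_def by blast
  then show "z \<in> setstar D A" unfolding setstar_def by blast
qed
lemma one_star: "dunit D \<in> setstar D A"
  using setpow_setstar[of A 0] by auto

end

locale rdioid = dioid +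
  assumes rd: "R_dioid D"
begin
lemma sup_reg: "A \<in> regsets D \<Longrightarrow> is_sup D A (dsup D A)"
proof -
  assume "A \<in> regsets D"
  then obtain s where "is_sup D A s" using rd unfolding R_dioid_def by blast
  then show ?thesis by (rule is_sup_ex)
qed
lemma sup_mul: "A \<in> regsets D \<Longrightarrow> B \<in> regsets D \<Longrightarrow>
  dsup D (setmul D A B) = dmul D (dsup D A) (dsup D B)"
  using rd unfolding R_dioid_def by blast
lemma sup_reg_c: "A \<in> regsets D \<Longrightarrow> dsup D A \<in> dcar D"
  using sup_reg is_sup_car by blast
end


context dioid
begin

lemma setmul_iff: "z \<in> setmul D A B \<longleftrightarrow> (\<exists>a b. z = dmul D a b \<and> a \<in> A \<and> b \<in> B)"
  unfolding setmul_def by blast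

primrec pp :: "(nat \<Rightarrow> nat \<Rightarrow> 'a set) \<Rightarrow> nat \<Rightarrow> nat list \<Rightarrow> nat \<Rightarrow> 'a set" where
  "pp R i [] j = R i j"
| "pp R i (x # xs) j = setmul D (R i x) (pp R x xs j)"

definition TT :: "(nat \<Rightarrow> nat \<Rightarrow> 'a set) \<Rightarrow> nat set \<Rightarrow> nat \<Rightarrow> nat \<Rightarrow> 'a set" where
  "TT R V i j = (\<Union>xs\<in>{xs. set xs \<subseteq> V}. pp R i xs j)"

context
  fixes R :: "nat \<Rightarrow> nat \<Rightarrow> 'a set"
  assumes RC: "\<And>i j. R i j \<subseteq> dcar D"
begin

lemma pp_c: "pp R i xs j \<subseteq> dcar D"
proof (induction xs arbitrary: i)
  case Nil then show ?case using RC by simp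
next
  case (Cons x xs) show ?case by (simp only: pp.simps) (rule setmul_c[OF RC Cons.IH])
qed

lemma pp_append: "pp R i (xs @ v # ys) j = setmul D (pp R i xs v) (pp R v ys j)"
proof (induction xs arbitrary: i)
  case Nil then show ?case by simp
next
  case (Cons x xs)
  have "pp R i ((x#xs) @ v # ys) j = setmul D (R i x) (setmul D (pp R x xs v) (pp R v ys j))"
    using Cons.IH by simp
  also have "\<dots> = setmul D (setmul D (R i x) (pp R x xs v)) (pp R v ys j)"
    by (rule setmul_assoc[symmetric]) (rule RC pp_c)+
  finally show ?case by simp
qed

lemma TT_c: "TT R V i j \<subseteq> dcar D"
  unfolding TT_def using pp_c by blast

lemma TT_empty: "TT R {} i j = R i j"
  unfolding TT_def by simp

lemma TT_mono: "V \<subseteq> W \<Longrightarrow> TT R V i j \<subseteq> TT R W i j"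
  unfolding TT_def by blast

lemma TT_concat: "v \<in> W \<Longrightarrow> setmul D (TT R W i v) (TT R W v j) \<subseteq> TT R W i j"
proof
  fix z assume v: "v \<in> W" and "z \<in> setmul D (TT R W i v) (TT R W v j)"
  then obtain a b xs ys where z: "z = dmul D a b" and a: "a \<in> pp R i xs v" and b: "b \<in> pp R v ys j"
    and xs: "set xs \<subseteq> W" and ys: "set ys \<subseteq> W"
    unfolding setmul_iff TT_def by blast
  have "z \<in> pp R i (xs @ v # ys) j" unfolding pp_append setmul_iff using z a b by blast
  moreover have "set (xs @ v # ys) \<subseteq> W" using xs ys v by auto
  ultimately show "z \<in> TT R W i j" unfolding TT_def by blast
qed

lemma star_part: "setmul D (setstar D (TT R V v v)) (TT R V v j) \<subseteq> TT R (insert v V) v j"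
proof
  fix z assume "z \<in> setmul D (setstar D (TT R V v v)) (TT R V v j)"
  then obtain k a b where z: "z = dmul D a b" and a: "a \<in> setpow D (TT R V v v) k" and b: "b \<in> TT R V v j"
    unfolding setmul_iff setstar_def by blast
  have "setmul D (setpow D (TT R V v v) k) (TT R V v j) \<subseteq> TT R (insert v V) v j"
  proof (induction k)
    case 0
    have "setmul D (setpow D (TT R V v v) 0) (TT R V v j) = TT R V v j"
      by (simp add: setmul_one_l TT_c)
    then show ?case using TT_mono[of V "insert v V" v j] by auto
  next
    case (Suc k)
    have "setmul D (setpow D (TT R V v v) (Suc k)) (TT R V v j) =
      setmul D (TT R V v v) (setmul D (setpow D (TT R V v v) k) (TT R V v j))"
      by (simp add: setmul_assoc TT_c setpow_c)
    also have "\<dots> \<subseteq> setmul D (TT R (insert v V) v v) (TT R (insert v V) v j)"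
      by (intro setmul_mono Suc TT_mono) auto
    also have "\<dots> \<subseteq> TT R (insert v V) v j" by (intro TT_concat) auto
    finally show ?case .
  qed
  moreover have "z \<in> setmul D (setpow D (TT R V v v) k) (TT R V v j)"
    using z a b unfolding setmul_iff by blast
  ultimately show "z \<in> TT R (insert v V) v j" by blast
qed

lemma pp_star: "set zs \<subseteq> insert v V \<Longrightarrow>
   pp R v zs j \<subseteq> setmul D (setstar D (TT R V v v)) (TT R V v j)"
proof (induction "length zs" arbitrary: zs rule: less_induct)
  case less
  show ?case
  proof (cases "v \<in> set zs")
    case False
    then have "pp R v zs j \<subseteq> TT R V v j" using less.prems unfolding TT_def by blast
    also have "\<dots> = setmul D {dunit D} (TT R V v j)" by (simp add: setmul_one_l TT_c)
    also have "\<dots> \<subseteq> setmul D (setstar D (TT R V v v)) (TT R V v j)"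
      by (intro setmul_mono) (auto simp: one_star)
    finally show ?thesis .
  next
    case True
    then obtain ys ws where zs: "zs = ys @ v # ws" and ys: "v \<notin> set ys"
      by (meson split_list_first)
    have "pp R v zs j = setmul D (pp R v ys v) (pp R v ws j)" by (simp add: zs pp_append)
    also have "\<dots> \<subseteq> setmul D (TT R V v v) (setmul D (setstar D (TT R V v v)) (TT R V v j))"
    proof (intro setmul_mono)
      show "pp R v ys v \<subseteq> TT R V v v" using less.prems ys zs unfolding TT_def by auto
      show "pp R v ws j \<subseteq> setmul D (setstar D (TT R V v v)) (TT R V v j)"
      proof (rule less.hyps)
        show "length ws < length zs" using zs by simp
        show "set ws \<subseteq> insert v V" using less.prems zs by auto
      qed
    qed
    also have "\<dots> = setmul D (setmul D (TT R V v v) (setstar D (TT R V v v))) (TT R V v j)"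
      by (simp add: setmul_assoc TT_c setstar_c)
    also have "\<dots> \<subseteq> setmul D (setstar D (TT R V v v)) (TT R V v j)"
      by (intro setmul_mono setmul_star) auto
    finally show ?thesis .
  qed
qed

lemma TT_insert: "TT R (insert v V) i j =
  TT R V i j \<union> setmul D (TT R V i v) (setmul D (setstar D (TT R V v v)) (TT R V v j))"
proof
  show "TT R (insert v V) i j
    \<subseteq> TT R V i j \<union> setmul D (TT R V i v) (setmul D (setstar D (TT R V v v)) (TT R V v j))"
  proof
    fix z assume "z \<in> TT R (insert v V) i j"
    then obtain xs where z: "z \<in> pp R i xs j" and xs: "set xs \<subseteq> insert v V" unfolding TT_def by blast
    show "z \<in> TT R V i j \<union> setmul D (TT R V i v) (setmul D (setstar D (TT R V v v)) (TT R V v j))"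
    proof (cases "v \<in> set xs")
      case False
      then show ?thesis using z xs unfolding TT_def by blast
    next
      case True
      then obtain ys zs where e: "xs = ys @ v # zs" and ys: "v \<notin> set ys"
        by (meson split_list_first)
      have "pp R i xs j \<subseteq> setmul D (TT R V i v) (setmul D (setstar D (TT R V v v)) (TT R V v j))"
        unfolding e pp_append
      proof (intro setmul_mono)
        show "pp R i ys v \<subseteq> TT R V i v" using xs ys e unfolding TT_def by auto
        show "pp R v zs j \<subseteq> setmul D (setstar D (TT R V v v)) (TT R V v j)"
          using xs e by (intro pp_star) auto
      qed
      then show ?thesis using z by blast
    qed
  qed
next
  have "setmul D (TT R V i v) (setmul D (setstar D (TT R V v v)) (TT R V v j))
     \<subseteq> setmul D (TT R (insert v V) i v) (TT R (insert v V) v j)"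
    by (intro setmul_mono star_part TT_mono) auto
  also have "\<dots> \<subseteq> TT R (insert v V) i j" by (intro TT_concat) auto
  finally show "TT R V i j \<union> setmul D (TT R V i v) (setmul D (setstar D (TT R V v v)) (TT R V v j))
    \<subseteq> TT R (insert v V) i j" using TT_mono[of V "insert v V" i j] by blast
qed

lemma TT_reg: "finite V \<Longrightarrow> (\<And>i j. R i j \<in> regsets D) \<Longrightarrow> TT R V i j \<in> regsets D"
proof (induction V arbitrary: i j rule: finite_induct)
  case empty then show ?case by (simp add: TT_empty)
next
  case (insert v V)
  have h: "\<And>a b. TT R V a b \<in> regsets D" using insert.IH insert.prems by blast
  show ?case unfolding TT_insert
    apply (rule reg_union)
     apply (rule h)
    apply (rule reg_mul)
     apply (rule h)
    apply (rule reg_mul)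
     apply (rule reg_star)
     apply (rule h)
    apply (rule h)
    done
qed

end
end

lemma Mat_simps:
  "dcar (Mat n K) = {M. (\<forall>i<n. \<forall>j<n. M i j \<in> dcar K) \<and> (\<forall>i j. \<not> (i < n \<and> j < n) \<longrightarrow> M i j = dzero K)}"
  "dadd (Mat n K) M N = (\<lambda>i j. if i < n \<and> j < n then dadd K (M i j) (N i j) else dzero K)"
  "dmul (Mat n K) M N = (\<lambda>i j. if i < n \<and> j < n then dsum K (\<lambda>k. dmul K (M i k) (N k j)) n else dzero K)"
  "dzero (Mat n K) = (\<lambda>i j. dzero K)"
  "dunit (Mat n K) = (\<lambda>i j. if i = j \<and> i < n then dunit K else dzero K)"
  by (simp_all add: Mat_def)

lemma Mat_car_iff: "M \<in> dcar (Mat n K) \<longleftrightarrow>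
   (\<forall>i<n. \<forall>j<n. M i j \<in> dcar K) \<and> (\<forall>i j. \<not> (i < n \<and> j < n) \<longrightarrow> M i j = dzero K)"
  by (simp add: Mat_simps)

lemma Mat_carD: "M \<in> dcar (Mat n K) \<Longrightarrow> i < n \<Longrightarrow> j < n \<Longrightarrow> M i j \<in> dcar K"
  by (simp add: Mat_simps)
lemma Mat_carD0: "M \<in> dcar (Mat n K) \<Longrightarrow> \<not> (i < n \<and> j < n) \<Longrightarrow> M i j = dzero K"
  by (simp add: Mat_simps)
lemma Mat_carI: "(\<And>i j. i < n \<Longrightarrow> j < n \<Longrightarrow> M i j \<in> dcar K) \<Longrightarrow>
   (\<And>i j. \<not> (i < n \<and> j < n) \<Longrightarrow> M i j = dzero K) \<Longrightarrow> M \<in> dcar (Mat n K)"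
  by (simp add: Mat_simps)

lemma Mat_eqI: "M \<in> dcar (Mat n K) \<Longrightarrow> N \<in> dcar (Mat n K) \<Longrightarrow>
   (\<And>i j. i < n \<Longrightarrow> j < n \<Longrightarrow> M i j = N i j) \<Longrightarrow> M = N"
  by (rule ext, rule ext) (metis Mat_carD0)

lemma Mat_add_ij: "i < n \<Longrightarrow> j < n \<Longrightarrow> dadd (Mat n K) M N i j = dadd K (M i j) (N i j)"
  by (simp add: Mat_simps)
lemma Mat_mul_ij: "i < n \<Longrightarrow> j < n \<Longrightarrow> dmul (Mat n K) M N i j = dsum K (\<lambda>k. dmul K (M i k) (N k j)) n"
  by (simp add: Mat_simps)
lemma Mat_unit_ij: "dunit (Mat n K) i j = (if i = j \<and> i < n then dunit K else dzero K)"
  by (simp add: Mat_simps)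
lemma Mat_zero_ij: "dzero (Mat n K) i j = dzero K"
  by (simp add: Mat_simps)

lemma Mat_dsum_ij: "dsum (Mat n K) F m i j = (if i < n \<and> j < n then dsum K (\<lambda>k. F k i j) m else dzero K)"
  by (induction m) (auto simp: Mat_simps)

context dioid
begin

lemma Mat_add_c: "M \<in> dcar (Mat n D) \<Longrightarrow> N \<in> dcar (Mat n D) \<Longrightarrow> dadd (Mat n D) M N \<in> dcar (Mat n D)"
  by (simp add: Mat_simps)
lemma Mat_mul_c: "M \<in> dcar (Mat n D) \<Longrightarrow> N \<in> dcar (Mat n D) \<Longrightarrow> dmul (Mat n D) M N \<in> dcar (Mat n D)"
  by (intro Mat_carI) (auto simp: Mat_simps)

lemma Mat_mul_assoc:
  assumes M: "M \<in> dcar (Mat n D)" and N: "N \<in> dcar (Mat n D)" and P: "P \<in> dcar (Mat n D)"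
  shows "dmul (Mat n D) (dmul (Mat n D) M N) P = dmul (Mat n D) M (dmul (Mat n D) N P)"
proof (rule Mat_eqI)
  show "dmul (Mat n D) (dmul (Mat n D) M N) P \<in> dcar (Mat n D)" using M N P by (intro Mat_mul_c)
  show "dmul (Mat n D) M (dmul (Mat n D) N P) \<in> dcar (Mat n D)" using M N P by (intro Mat_mul_c)
  fix i j assume ij: "i < n" "j < n"
  have c: "\<And>a b. a < n \<Longrightarrow> b < n \<Longrightarrow> M a b \<in> dcar D \<and> N a b \<in> dcar D \<and> P a b \<in> dcar D"
    using M N P by (simp add: Mat_carD)
  have "dmul (Mat n D) (dmul (Mat n D) M N) P i j
      = dsum D (\<lambda>l. dmul D (dsum D (\<lambda>k. dmul D (M i k) (N k l)) n) (P l j)) n"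
    using ij by (simp add: Mat_mul_ij cong: dsum_cong)
  also have "\<dots> = dsum D (\<lambda>l. dsum D (\<lambda>k. dmul D (dmul D (M i k) (N k l)) (P l j)) n) n"
    using ij c by (intro dsum_cong dsum_mul_r) auto
  also have "\<dots> = dsum D (\<lambda>k. dsum D (\<lambda>l. dmul D (dmul D (M i k) (N k l)) (P l j)) n) n"
    using ij c by (intro dsum_swap) auto
  also have "\<dots> = dsum D (\<lambda>k. dmul D (M i k) (dsum D (\<lambda>l. dmul D (N k l) (P l j)) n)) n"
  proof (rule dsum_cong)
    fix k assume k: "k < n"
    have "dsum D (\<lambda>l. dmul D (dmul D (M i k) (N k l)) (P l j)) n
        = dsum D (\<lambda>l. dmul D (M i k) (dmul D (N k l) (P l j))) n"
      using c ij k by (intro dsum_cong) (simp add: mul_assoc)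
    also have "\<dots> = dmul D (M i k) (dsum D (\<lambda>l. dmul D (N k l) (P l j)) n)"
      using c ij k by (intro dsum_mul_l[symmetric]) auto
    finally show "dsum D (\<lambda>l. dmul D (dmul D (M i k) (N k l)) (P l j)) n
        = dmul D (M i k) (dsum D (\<lambda>l. dmul D (N k l) (P l j)) n)" .
  qed
  also have "\<dots> = dmul (Mat n D) M (dmul (Mat n D) N P) i j"
    using ij by (simp add: Mat_mul_ij cong: dsum_cong)
  finally show "dmul (Mat n D) (dmul (Mat n D) M N) P i j = dmul (Mat n D) M (dmul (Mat n D) N P) i j" .
qed

lemma Mat_distl:
  assumes M: "M \<in> dcar (Mat n D)" and N: "N \<in> dcar (Mat n D)" and P: "P \<in> dcar (Mat n D)"
  shows "dmul (Mat n D) M (dadd (Mat n D) N P) = dadd (Mat n D) (dmul (Mat n D) M N) (dmul (Mat n D) M P)"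
proof (rule Mat_eqI)
  show "dmul (Mat n D) M (dadd (Mat n D) N P) \<in> dcar (Mat n D)" using M N P by (intro Mat_mul_c Mat_add_c)
  show "dadd (Mat n D) (dmul (Mat n D) M N) (dmul (Mat n D) M P) \<in> dcar (Mat n D)"
    using M N P by (intro Mat_mul_c Mat_add_c)
  fix i j assume ij: "i < n" "j < n"
  have c: "\<And>a b. a < n \<Longrightarrow> b < n \<Longrightarrow> M a b \<in> dcar D \<and> N a b \<in> dcar D \<and> P a b \<in> dcar D"
    using M N P by (simp add: Mat_carD)
  have "dmul (Mat n D) M (dadd (Mat n D) N P) i j
      = dsum D (\<lambda>k. dadd D (dmul D (M i k) (N k j)) (dmul D (M i k) (P k j))) n"
    using ij c by (auto simp: Mat_mul_ij Mat_add_ij distl intro: dsum_cong)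
  also have "\<dots> = dadd (Mat n D) (dmul (Mat n D) M N) (dmul (Mat n D) M P) i j"
    using ij c by (simp add: Mat_mul_ij Mat_add_ij dsum_add)
  finally show "dmul (Mat n D) M (dadd (Mat n D) N P) i j =
      dadd (Mat n D) (dmul (Mat n D) M N) (dmul (Mat n D) M P) i j" .
qed

lemma Mat_distr:
  assumes M: "M \<in> dcar (Mat n D)" and N: "N \<in> dcar (Mat n D)" and P: "P \<in> dcar (Mat n D)"
  shows "dmul (Mat n D) (dadd (Mat n D) M N) P = dadd (Mat n D) (dmul (Mat n D) M P) (dmul (Mat n D) N P)"
proof (rule Mat_eqI)
  show "dmul (Mat n D) (dadd (Mat n D) M N) P \<in> dcar (Mat n D)" using M N P by (intro Mat_mul_c Mat_add_c)
  show "dadd (Mat n D) (dmul (Mat n D) M P) (dmul (Mat n D) N P) \<in> dcar (Mat n D)"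
    using M N P by (intro Mat_mul_c Mat_add_c)
  fix i j assume ij: "i < n" "j < n"
  have c: "\<And>a b. a < n \<Longrightarrow> b < n \<Longrightarrow> M a b \<in> dcar D \<and> N a b \<in> dcar D \<and> P a b \<in> dcar D"
    using M N P by (simp add: Mat_carD)
  have "dmul (Mat n D) (dadd (Mat n D) M N) P i j
      = dsum D (\<lambda>k. dadd D (dmul D (M i k) (P k j)) (dmul D (N i k) (P k j))) n"
    using ij c by (auto simp: Mat_mul_ij Mat_add_ij distr intro: dsum_cong)
  also have "\<dots> = dadd (Mat n D) (dmul (Mat n D) M P) (dmul (Mat n D) N P) i j"
    using ij c by (simp add: Mat_mul_ij Mat_add_ij dsum_add)
  finally show "dmul (Mat n D) (dadd (Mat n D) M N) P i j =
      dadd (Mat n D) (dmul (Mat n D) M P) (dmul (Mat n D) N P) i j" .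
qed

lemma Mat_one_l:
  assumes M: "M \<in> dcar (Mat n D)"
  shows "dmul (Mat n D) (dunit (Mat n D)) M = M"
proof (rule Mat_eqI)
  show "dmul (Mat n D) (dunit (Mat n D)) M \<in> dcar (Mat n D)"
    using M by (intro Mat_mul_c) (auto simp: Mat_simps)
  show "M \<in> dcar (Mat n D)" by fact
  fix i j assume ij: "i < n" "j < n"
  have "dmul (Mat n D) (dunit (Mat n D)) M i j = dsum D (\<lambda>k. if i = k then M k j else dzero D) n"
    using ij M by (auto simp: Mat_mul_ij Mat_unit_ij Mat_carD intro: dsum_cong)
  also have "\<dots> = M i j" using ij M by (simp add: dsum_delta' Mat_carD)
  finally show "dmul (Mat n D) (dunit (Mat n D)) M i j = M i j" .
qed

lemma Mat_one_r:
  assumes M: "M \<in> dcar (Mat n D)"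
  shows "dmul (Mat n D) M (dunit (Mat n D)) = M"
proof (rule Mat_eqI)
  show "dmul (Mat n D) M (dunit (Mat n D)) \<in> dcar (Mat n D)"
    using M by (intro Mat_mul_c) (auto simp: Mat_simps)
  show "M \<in> dcar (Mat n D)" by fact
  fix i j assume ij: "i < n" "j < n"
  have "dmul (Mat n D) M (dunit (Mat n D)) i j = dsum D (\<lambda>k. if k = j then M i k else dzero D) n"
    using ij M by (auto simp: Mat_mul_ij Mat_unit_ij Mat_carD intro: dsum_cong)
  also have "\<dots> = M i j" using ij M by (simp add: dsum_delta Mat_carD)
  finally show "dmul (Mat n D) M (dunit (Mat n D)) i j = M i j" .
qed

lemma Mat_dioid: "is_dioid (Mat n D)"
  unfolding is_dioid_def
proof (intro conjI ballI)
  show "dzero (Mat n D) \<in> dcar (Mat n D)" by (simp add: Mat_simps)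
  show "dunit (Mat n D) \<in> dcar (Mat n D)" by (simp add: Mat_simps)
  fix a b assume a: "a \<in> dcar (Mat n D)" and b: "b \<in> dcar (Mat n D)"
  show "dadd (Mat n D) a b \<in> dcar (Mat n D)" using a b by (rule Mat_add_c)
  show "dmul (Mat n D) a b \<in> dcar (Mat n D)" using a b by (rule Mat_mul_c)
  show "dadd (Mat n D) a b = dadd (Mat n D) b a"
    using a b by (intro Mat_eqI[where n=n and K=D] Mat_add_c) (auto simp: Mat_add_ij Mat_carD add_comm)
  fix c assume c: "c \<in> dcar (Mat n D)"
  show "dadd (Mat n D) (dadd (Mat n D) a b) c = dadd (Mat n D) a (dadd (Mat n D) b c)"
    using a b c by (intro Mat_eqI[where n=n and K=D] Mat_add_c) (auto simp: Mat_add_ij Mat_carD add_assoc)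
  show "dmul (Mat n D) (dmul (Mat n D) a b) c = dmul (Mat n D) a (dmul (Mat n D) b c)"
    using a b c by (rule Mat_mul_assoc)
  show "dmul (Mat n D) a (dadd (Mat n D) b c) = dadd (Mat n D) (dmul (Mat n D) a b) (dmul (Mat n D) a c)"
    using a b c by (rule Mat_distl)
  show "dmul (Mat n D) (dadd (Mat n D) a b) c = dadd (Mat n D) (dmul (Mat n D) a c) (dmul (Mat n D) b c)"
    using a b c by (rule Mat_distr)
next
  fix a assume a: "a \<in> dcar (Mat n D)"
  have z: "dzero (Mat n D) \<in> dcar (Mat n D)" by (simp add: Mat_simps)
  show "dadd (Mat n D) a a = a"
    using a by (intro Mat_eqI[where n=n and K=D] Mat_add_c) (auto simp: Mat_add_ij Mat_carD)
  show "dadd (Mat n D) (dzero (Mat n D)) a = a"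
    using a z by (intro Mat_eqI[where n=n and K=D] Mat_add_c) (auto simp: Mat_add_ij Mat_carD Mat_zero_ij)
  show "dmul (Mat n D) (dunit (Mat n D)) a = a" using a by (rule Mat_one_l)
  show "dmul (Mat n D) a (dunit (Mat n D)) = a" using a by (rule Mat_one_r)
  show "dmul (Mat n D) (dzero (Mat n D)) a = dzero (Mat n D)"
    using a z by (intro Mat_eqI[where n=n and K=D] Mat_mul_c) (auto simp: Mat_mul_ij Mat_carD Mat_zero_ij cong: dsum_cong)
  show "dmul (Mat n D) a (dzero (Mat n D)) = dzero (Mat n D)"
    using a z by (intro Mat_eqI[where n=n and K=D] Mat_mul_c) (auto simp: Mat_mul_ij Mat_carD Mat_zero_ij cong: dsum_cong)
qed

end


locale mat_l = rdioid D for D :: "'a dioid_struct" +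
  fixes n :: nat

sublocale mat_l \<subseteq> M: dioid "Mat n D"
  by (rule dioid.intro, rule Mat_dioid)

context mat_l
begin

abbreviation MK where "MK \<equiv> Mat n D"

lemma Mat_le_iff: "M \<in> dcar MK \<Longrightarrow> N \<in> dcar MK \<Longrightarrow>
  dleq MK M N \<longleftrightarrow> (\<forall>i<n. \<forall>j<n. le (M i j) (N i j))"
proof
  assume M: "M \<in> dcar MK" and N: "N \<in> dcar MK" and h: "dleq MK M N"
  show "\<forall>i<n. \<forall>j<n. le (M i j) (N i j)"
  proof (intro allI impI)
    fix i j assume ij: "i < n" "j < n"
    have "dadd MK M N i j = N i j" using h unfolding dleq_def by simp
    then show "le (M i j) (N i j)" using ij unfolding dleq_def by (simp add: Mat_add_ij)
  qed
next
  assume M: "M \<in> dcar MK" and N: "N \<in> dcar MK" and h: "\<forall>i<n. \<forall>j<n. le (M i j) (N i j)"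
  show "dleq MK M N" unfolding dleq_def
  proof (rule Mat_eqI[where n=n and K=D])
    show "dadd MK M N \<in> dcar MK" using M N by simp
    show "N \<in> dcar MK" by fact
    fix i j assume ij: "i < n" "j < n"
    then show "dadd MK M N i j = N i j" using h unfolding dleq_def by (simp add: Mat_add_ij)
  qed
qed

definition rep :: "(nat \<Rightarrow> nat \<Rightarrow> 'a) set \<Rightarrow> (nat \<Rightarrow> nat \<Rightarrow> 'a set) \<Rightarrow> bool" where
  "rep A R \<longleftrightarrow> (\<forall>i j. R i j \<in> regsets D) \<and>
     (\<forall>i<n. \<forall>j<n. (\<forall>r\<in>R i j. \<exists>M\<in>A. le r (M i j)) \<and> (\<forall>M\<in>A. le (M i j) (dsup D (R i j))))"

definition supmat :: "(nat \<Rightarrow> nat \<Rightarrow> 'a set) \<Rightarrow> nat \<Rightarrow> nat \<Rightarrow> 'a" where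
  "supmat R = (\<lambda>i j. if i < n \<and> j < n then dsup D (R i j) else dzero D)"

lemma rep_regD: "rep A R \<Longrightarrow> R i j \<in> regsets D"
  unfolding rep_def by blast
lemma rep_lowD: "rep A R \<Longrightarrow> i < n \<Longrightarrow> j < n \<Longrightarrow> r \<in> R i j \<Longrightarrow> \<exists>M\<in>A. le r (M i j)"
  unfolding rep_def by blast
lemma rep_upD: "rep A R \<Longrightarrow> i < n \<Longrightarrow> j < n \<Longrightarrow> M \<in> A \<Longrightarrow> le (M i j) (dsup D (R i j))"
  unfolding rep_def by blast

lemma supmat_c: "(\<And>i j. R i j \<in> regsets D) \<Longrightarrow> supmat R \<in> dcar MK"
  by (rule Mat_carI) (auto simp: supmat_def sup_reg_c)

lemma rep_sup:
  assumes A: "A \<subseteq> dcar MK" and r: "rep A R"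
  shows "is_sup MK A (supmat R)"
  unfolding is_sup_def
proof (intro conjI ballI impI)
  show sc: "supmat R \<in> dcar MK" using r by (intro supmat_c rep_regD)
  fix M assume M: "M \<in> A"
  show "dleq MK M (supmat R)"
    using M A sc r by (subst Mat_le_iff) (auto simp: supmat_def intro: rep_upD)
next
  fix U assume U: "U \<in> dcar MK" and ub: "\<forall>M\<in>A. dleq MK M U"
  have sc: "supmat R \<in> dcar MK" using r by (intro supmat_c rep_regD)
  have "le (dsup D (R i j)) (U i j)" if ij: "i < n" "j < n" for i j
  proof (rule is_sup_least)
    show "is_sup D (R i j) (dsup D (R i j))" using r by (intro sup_reg rep_regD)
    show "U i j \<in> dcar D" using U ij by (simp add: Mat_carD)
    fix x assume x: "x \<in> R i j"
    then obtain M where M: "M \<in> A" and le1: "le x (M i j)" using rep_lowD[OF r ij] by blast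
    have "le (M i j) (U i j)" using ub M A U ij Mat_le_iff[of M U] by auto
    moreover have "x \<in> dcar D" using x regsets_c[OF rep_regD[OF r]] by blast
    moreover have "M i j \<in> dcar D" using M A ij by (auto intro: Mat_carD)
    ultimately show "le x (U i j)" using le1 U ij le_trans[of x "M i j" "U i j"] by (simp add: Mat_carD)
  qed
  then show "dleq MK (supmat R) U" using sc U by (subst Mat_le_iff) (auto simp: supmat_def)
qed

lemma rep_empty: "rep {} (\<lambda>i j. {})"
  unfolding rep_def by (simp add: reg_empty)

lemma rep_single: "M \<in> dcar MK \<Longrightarrow> rep {M} (\<lambda>i j. {M i j})"
  unfolding rep_def
proof (intro conjI allI impI ballI)
  fix i j assume M: "M \<in> dcar MK"
  show "{M i j} \<in> regsets D"
  proof (cases "i < n \<and> j < n")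
    case True then show ?thesis using M by (intro reg_single) (simp add: Mat_carD)
  next
    case False then show ?thesis using M by (simp add: Mat_carD0 reg_single)
  qed
next
  fix i j r assume M: "M \<in> dcar MK" and ij: "i < n" "j < n" and "r \<in> {M i j}"
  then show "\<exists>N\<in>{M}. le r (N i j)" by (simp add: Mat_carD)
next
  fix i j N assume M: "M \<in> dcar MK" and ij: "i < n" "j < n" and "N \<in> {M}"
  have "dsup D {M i j} = M i j" using M ij by (intro dsup_eq is_sup_single) (simp add: Mat_carD)
  then show "le (N i j) (dsup D {M i j})" using M ij \<open>N \<in> {M}\<close> by (simp add: Mat_carD)
qed

lemma rep_union:
  assumes A: "A \<subseteq> dcar MK" and B: "B \<subseteq> dcar MK" and ra: "rep A RA" and rb: "rep B RB"
  shows "rep (A \<union> B) (\<lambda>i j. RA i j \<union> RB i j)"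
  unfolding rep_def
proof (intro conjI allI impI ballI)
  fix i j
  show "RA i j \<union> RB i j \<in> regsets D" using ra rb by (intro reg_union rep_regD)
next
  fix i j r assume ij: "i < n" "j < n" and r: "r \<in> RA i j \<union> RB i j"
  then show "\<exists>M\<in>A \<union> B. le r (M i j)" using rep_lowD[OF ra ij] rep_lowD[OF rb ij] by blast
next
  fix i j M assume ij: "i < n" "j < n" and M: "M \<in> A \<union> B"
  have ca: "RA i j \<subseteq> dcar D" and cb: "RB i j \<subseteq> dcar D"
    using regsets_c[OF rep_regD[OF ra]] regsets_c[OF rep_regD[OF rb]] by auto
  have sa: "is_sup D (RA i j) (dsup D (RA i j))" and sb: "is_sup D (RB i j) (dsup D (RB i j))"
    using ra rb by (auto intro: sup_reg rep_regD)
  have eq: "dsup D (RA i j \<union> RB i j) = dadd D (dsup D (RA i j)) (dsup D (RB i j))"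
    by (rule dsup_eq, rule is_sup_union[OF ca cb sa sb])
  have c1: "dsup D (RA i j) \<in> dcar D" "dsup D (RB i j) \<in> dcar D" using sa sb by (auto intro: is_sup_car)
  have Mc: "M i j \<in> dcar D" using M A B ij by (auto intro: Mat_carD)
  show "le (M i j) (dsup D (RA i j \<union> RB i j))"
    unfolding eq
  proof (cases "M \<in> A")
    case True
    then have "le (M i j) (dsup D (RA i j))" using rep_upD[OF ra ij] by blast
    then show "le (M i j) (dadd D (dsup D (RA i j)) (dsup D (RB i j)))"
      using c1 Mc le_add1[of "dsup D (RA i j)" "dsup D (RB i j)"]
        le_trans[of "M i j" "dsup D (RA i j)" "dadd D (dsup D (RA i j)) (dsup D (RB i j))"] by simp
  next
    case False
    then have "M \<in> B" using M by blast
    then have "le (M i j) (dsup D (RB i j))" using rep_upD[OF rb ij] by blast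
    then show "le (M i j) (dadd D (dsup D (RA i j)) (dsup D (RB i j)))"
      using c1 Mc le_add2[of "dsup D (RA i j)" "dsup D (RB i j)"]
        le_trans[of "M i j" "dsup D (RB i j)" "dadd D (dsup D (RA i j)) (dsup D (RB i j))"] by simp
  qed
qed

lemma prod_lower:
  assumes M: "M \<in> dcar MK" and N: "N \<in> dcar MK" and ijk: "i < n" "j < n" "k < n"
    and x: "x \<in> dcar D" and y: "y \<in> dcar D" and lx: "le x (M i k)" and ly: "le y (N k j)"
  shows "le (dmul D x y) (dmul MK M N i j)"
proof -
  have c: "\<And>a b. a < n \<Longrightarrow> b < n \<Longrightarrow> M a b \<in> dcar D \<and> N a b \<in> dcar D"
    using M N by (simp add: Mat_carD)
  have "le (dmul D x y) (dmul D (M i k) (N k j))" using c ijk x y lx ly by (intro mul_mono) auto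
  moreover have "le (dmul D (M i k) (N k j)) (dsum D (\<lambda>k. dmul D (M i k) (N k j)) n)"
    using c ijk by (intro dsum_upper) auto
  ultimately show ?thesis using c ijk x y le_trans[of "dmul D x y" "dmul D (M i k) (N k j)"]
    by (simp add: Mat_mul_ij)
qed

lemma prod_upper:
  assumes M: "M \<in> dcar MK" and N: "N \<in> dcar MK" and ij: "i < n" "j < n"
    and ab: "\<And>k. k < n \<Longrightarrow> a k \<in> dcar D \<and> b k \<in> dcar D"
    and la: "\<And>k. k < n \<Longrightarrow> le (M i k) (a k)" and lb: "\<And>k. k < n \<Longrightarrow> le (N k j) (b k)"
  shows "le (dmul MK M N i j) (dsum D (\<lambda>k. dmul D (a k) (b k)) n)"
proof -
  have c: "\<And>a b. a < n \<Longrightarrow> b < n \<Longrightarrow> M a b \<in> dcar D \<and> N a b \<in> dcar D"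
    using M N by (simp add: Mat_carD)
  show ?thesis using ij c ab la lb by (simp add: Mat_mul_ij) (intro dsum_mono mul_mono, auto)
qed

lemma sup_mulset:
  assumes ra: "\<And>i j. RA i j \<in> regsets D" and rb: "\<And>i j. RB i j \<in> regsets D"
  shows "dsup D (\<Union>k<n. setmul D (RA i k) (RB k j)) = dsum D (\<lambda>k. dmul D (dsup D (RA i k)) (dsup D (RB k j))) n"
proof (rule dsup_eq, rule is_sup_UN)
  fix k
  show "setmul D (RA i k) (RB k j) \<subseteq> dcar D" using ra rb by (intro regsets_c reg_mul)
  have "is_sup D (setmul D (RA i k) (RB k j)) (dsup D (setmul D (RA i k) (RB k j)))"
    using ra rb by (intro sup_reg reg_mul)
  then show "is_sup D (setmul D (RA i k) (RB k j)) (dmul D (dsup D (RA i k)) (dsup D (RB k j)))"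
    using ra rb by (simp add: sup_mul)
qed

lemma rep_mul:
  assumes A: "A \<subseteq> dcar MK" and B: "B \<subseteq> dcar MK" and ra: "rep A RA" and rb: "rep B RB"
  shows "rep (setmul MK A B) (\<lambda>i j. \<Union>k<n. setmul D (RA i k) (RB k j))"
  unfolding rep_def
proof (intro conjI allI impI ballI)
  fix i j
  show "(\<Union>k<n. setmul D (RA i k) (RB k j)) \<in> regsets D"
    using ra rb by (intro regsets_UN reg_mul rep_regD)
next
  fix i j r assume ij: "i < n" "j < n" and r: "r \<in> (\<Union>k<n. setmul D (RA i k) (RB k j))"
  then obtain k where k: "k < n" and r': "r \<in> setmul D (RA i k) (RB k j)" by blast
  then obtain a b where a: "a \<in> RA i k" and b: "b \<in> RB k j" and rab: "r = dmul D a b"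
    unfolding setmul_iff by blast
  obtain M where M: "M \<in> A" "le a (M i k)" using rep_lowD[OF ra ij(1) k a] by blast
  obtain N where N: "N \<in> B" "le b (N k j)" using rep_lowD[OF rb k ij(2) b] by blast
  have ac: "a \<in> dcar D" using a regsets_c[OF rep_regD[OF ra]] by blast
  have bc: "b \<in> dcar D" using b regsets_c[OF rep_regD[OF rb]] by blast
  have "le r (dmul MK M N i j)" unfolding rab
    using M N A B ij k ac bc by (intro prod_lower) auto
  moreover have "dmul MK M N \<in> setmul MK A B" using M N unfolding M.setmul_iff by blast
  ultimately show "\<exists>P\<in>setmul MK A B. le r (P i j)" by blast
next
  fix i j P assume ij: "i < n" "j < n" and P: "P \<in> setmul MK A B"
  then obtain M N where MN: "M \<in> A" "N \<in> B" "P = dmul MK M N" unfolding M.setmul_iff by blast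
  have "le (P i j) (dsum D (\<lambda>k. dmul D (dsup D (RA i k)) (dsup D (RB k j))) n)"
    unfolding MN(3)
  proof (rule prod_upper)
    show "M \<in> dcar MK" "N \<in> dcar MK" using MN A B by auto
    fix k assume k: "k < n"
    show "dsup D (RA i k) \<in> dcar D \<and> dsup D (RB k j) \<in> dcar D" using ra rb by (auto intro: sup_reg_c rep_regD)
    show "le (M i k) (dsup D (RA i k))" using rep_upD[OF ra ij(1) k MN(1)] .
    show "le (N k j) (dsup D (RB k j))" using rep_upD[OF rb k ij(2) MN(2)] .
  qed (use ij in auto)
  then show "le (P i j) (dsup D (\<Union>k<n. setmul D (RA i k) (RB k j)))"
    using ra rb by (simp add: sup_mulset rep_regD)
qed

end

context mat_l
begin

definition W :: "(nat \<Rightarrow> nat \<Rightarrow> 'a set) \<Rightarrow> nat \<Rightarrow> nat \<Rightarrow> 'a set" where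
  "W R i j = (if i = j then {dunit D} else {}) \<union> TT R {..<n} i j"

lemma W_reg: "(\<And>i j. R i j \<in> regsets D) \<Longrightarrow> W R i j \<in> regsets D"
  unfolding W_def
proof (rule reg_union)
  assume r: "\<And>i j. R i j \<in> regsets D"
  show "(if i = j then {dunit D} else {}) \<in> regsets D" by (simp add: reg_single reg_empty)
  show "TT R {..<n} i j \<in> regsets D" using r by (intro TT_reg regsets_c) auto
qed

lemma A_pow1: "A \<subseteq> dcar MK \<Longrightarrow> M \<in> A \<Longrightarrow> M \<in> setpow MK A (Suc 0)"
proof -
  assume A: "A \<subseteq> dcar MK" and M: "M \<in> A"
  have "M = dmul MK M (dunit MK)" using A M by (simp add: subset_iff)
  then show ?thesis using M unfolding setpow.simps M.setmul_iff by blast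
qed

lemma pp_lower:
  assumes A: "A \<subseteq> dcar MK" and r: "rep A R" and j: "j < n"
  shows "set xs \<subseteq> {..<n} \<Longrightarrow> i < n \<Longrightarrow> x \<in> pp R i xs j \<Longrightarrow> \<exists>m. \<exists>M\<in>setpow MK A m. le x (M i j)"
proof (induction xs arbitrary: i x)
  case Nil
  then obtain M where "M \<in> A" "le x (M i j)" using rep_lowD[OF r _ j] by auto
  then show ?case using A_pow1[OF A] by blast
next
  case (Cons y xs)
  have RC: "\<And>i j. R i j \<subseteq> dcar D" using r by (intro regsets_c rep_regD)
  from Cons.prems obtain a b where ab: "x = dmul D a b" "a \<in> R i y" "b \<in> pp R y xs j"
    unfolding pp.simps setmul_iff by blast
  have y: "y < n" and xs: "set xs \<subseteq> {..<n}" using Cons.prems by auto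
  obtain N where N: "N \<in> A" "le a (N i y)" using rep_lowD[OF r Cons.prems(2) y ab(2)] by blast
  obtain m M where M: "M \<in> setpow MK A m" "le b (M y j)" using Cons.IH[OF xs y ab(3)] by blast
  have Nc: "N \<in> dcar MK" using N A by auto
  have Mc: "M \<in> dcar MK" using M.setpow_c[OF A] M by blast
  have ac: "a \<in> dcar D" using RC ab by blast
  have "pp R y xs j \<subseteq> dcar D" by (rule pp_c) (rule RC)
  then have bc: "b \<in> dcar D" using ab by blast
  have "le x (dmul MK N M i j)" unfolding ab(1)
    by (rule prod_lower[OF Nc Mc Cons.prems(2) j y ac bc N(2) M(2)])
  moreover have "dmul MK N M \<in> setpow MK A (Suc m)" unfolding setpow.simps M.setmul_iff
    using N M by blast
  ultimately show ?case by blast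
qed

lemma W_closed:
  assumes r: "rep A R" and k: "k < n"
  shows "setmul D (R i k) (W R k j) \<subseteq> W R i j"
proof
  have RC: "\<And>i j. R i j \<subseteq> dcar D" using r by (intro regsets_c rep_regD)
  fix z assume "z \<in> setmul D (R i k) (W R k j)"
  then obtain a w where z: "z = dmul D a w" and a: "a \<in> R i k" and w: "w \<in> W R k j"
    unfolding setmul_iff by blast
  have ac: "a \<in> dcar D" using RC a by blast
  show "z \<in> W R i j"
  proof (cases "w \<in> TT R {..<n} k j")
    case False
    then have "k = j" "w = dunit D" using w unfolding W_def by (auto split: if_splits)
    then have "z \<in> pp R i [] j" using z a ac by simp
    then have "z \<in> TT R {..<n} i j" unfolding TT_def by (intro UN_I[of "[]"]) auto
    then show ?thesis unfolding W_def by (rule UnI2)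
  next
    case True
    then obtain xs where xs: "set xs \<subseteq> {..<n}" "w \<in> pp R k xs j" unfolding TT_def by blast
    have "z \<in> pp R i (k # xs) j" unfolding pp.simps setmul_iff using z a xs by blast
    moreover have "set (k # xs) \<subseteq> {..<n}" using xs k by auto
    ultimately have "z \<in> TT R {..<n} i j" unfolding TT_def by (intro UN_I[of "k # xs"]) auto
    then show ?thesis unfolding W_def by (rule UnI2)
  qed
qed

lemma star_upper:
  assumes A: "A \<subseteq> dcar MK" and r: "rep A R"
  shows "M \<in> setpow MK A m \<Longrightarrow> i < n \<Longrightarrow> j < n \<Longrightarrow> le (M i j) (dsup D (W R i j))"
proof (induction m arbitrary: M i j)
  case 0
  have Wr: "\<And>i j. W R i j \<in> regsets D" using r by (intro W_reg rep_regD)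
  have M: "M = dunit MK" using 0 by simp
  show ?case
  proof (cases "i = j")
    case True
    then have "dunit D \<in> W R i j" unfolding W_def by simp
    then have "le (dunit D) (dsup D (W R i j))" using sup_reg[OF Wr] by (rule is_sup_upper[rotated])
    then show ?thesis using M True 0 by (simp add: Mat_unit_ij)
  next
    case False
    then show ?thesis using M 0 Wr by (simp add: Mat_unit_ij sup_reg_c)
  qed
next
  case (Suc m)
  have Wr: "\<And>i j. W R i j \<in> regsets D" using r by (intro W_reg rep_regD)
  have Rr: "\<And>i j. R i j \<in> regsets D" using r by (intro rep_regD)
  from Suc.prems obtain N M' where NM: "N \<in> A" "M' \<in> setpow MK A m" "M = dmul MK N M'"
    unfolding setpow.simps M.setmul_iff by blast
  have Nc: "N \<in> dcar MK" using NM A by auto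
  have Mc: "M' \<in> dcar MK" using M.setpow_c[OF A] NM by blast
  have "le (M i j) (dsum D (\<lambda>k. dmul D (dsup D (R i k)) (dsup D (W R k j))) n)"
    unfolding NM(3)
  proof (rule prod_upper[OF Nc Mc Suc.prems(2,3)])
    fix k assume k: "k < n"
    show "dsup D (R i k) \<in> dcar D \<and> dsup D (W R k j) \<in> dcar D" using Rr Wr by (simp add: sup_reg_c)
    show "le (N i k) (dsup D (R i k))" by (rule rep_upD[OF r Suc.prems(2) k NM(1)])
    show "le (M' k j) (dsup D (W R k j))" by (rule Suc.IH[OF NM(2) k Suc.prems(3)])
  qed
  moreover have "le (dsum D (\<lambda>k. dmul D (dsup D (R i k)) (dsup D (W R k j))) n) (dsup D (W R i j))"
  proof (rule dsum_lub)
    fix k assume k: "k < n"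
    show "dmul D (dsup D (R i k)) (dsup D (W R k j)) \<in> dcar D" using Rr Wr by (simp add: sup_reg_c)
    have "dmul D (dsup D (R i k)) (dsup D (W R k j)) = dsup D (setmul D (R i k) (W R k j))"
      using Rr Wr by (simp add: sup_mul)
    moreover have "le (dsup D (setmul D (R i k) (W R k j))) (dsup D (W R i j))"
      using W_closed[OF r k] sup_reg[OF reg_mul[OF Rr Wr]] sup_reg[OF Wr] by (rule is_sup_mono)
    ultimately show "le (dmul D (dsup D (R i k)) (dsup D (W R k j))) (dsup D (W R i j))" by simp
  qed (use Wr in \<open>simp add: sup_reg_c\<close>)
  moreover have "M i j \<in> dcar D" using Mat_carD[OF M.mul_c[OF Nc Mc]] NM(3) Suc.prems(2,3) by simp
  moreover have "dsum D (\<lambda>k. dmul D (dsup D (R i k)) (dsup D (W R k j))) n \<in> dcar D"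
    using Rr Wr by (simp add: sup_reg_c)
  moreover have "dsup D (W R i j) \<in> dcar D" using Wr by (simp add: sup_reg_c)
  ultimately show ?case
    using le_trans[of "M i j" "dsum D (\<lambda>k. dmul D (dsup D (R i k)) (dsup D (W R k j))) n" "dsup D (W R i j)"]
    by blast
qed

lemma rep_star:
  assumes A: "A \<subseteq> dcar MK" and r: "rep A R"
  shows "rep (setstar MK A) (W R)"
  unfolding rep_def
proof (intro conjI allI impI ballI)
  fix i j show "W R i j \<in> regsets D" using r by (intro W_reg rep_regD)
next
  fix i j x assume ij: "i < n" "j < n" and x: "x \<in> W R i j"
  show "\<exists>M\<in>setstar MK A. le x (M i j)"
  proof (cases "x \<in> TT R {..<n} i j")
    case True
    then obtain xs where "set xs \<subseteq> {..<n}" "x \<in> pp R i xs j" unfolding TT_def by blast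
    then obtain m M where "M \<in> setpow MK A m" "le x (M i j)" using pp_lower[OF A r ij(2)] ij by blast
    then show ?thesis unfolding setstar_def by blast
  next
    case False
    then have "i = j" "x = dunit D" using x unfolding W_def by (auto split: if_splits)
    moreover have "dunit MK \<in> setstar MK A" by (rule M.one_star)
    ultimately show ?thesis using ij by (intro bexI[of _ "dunit MK"]) (simp_all add: Mat_unit_ij)
  qed
next
  fix i j M assume ij: "i < n" "j < n" and M: "M \<in> setstar MK A"
  then obtain m where "M \<in> setpow MK A m" unfolding setstar_def by blast
  then show "le (M i j) (dsup D (W R i j))" using star_upper[OF A r] ij by blast
qed

lemma rep_reg: "A \<in> regsets MK \<Longrightarrow> \<exists>R. rep A R"
proof (induction A rule: regsets.induct)
  case reg_empty then show ?case using rep_empty by blast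
next
  case (reg_single a) then show ?case using rep_single by blast
next
  case (reg_union A B)
  then obtain RA RB where "rep A RA" "rep B RB" by blast
  then have "rep (A \<union> B) (\<lambda>i j. RA i j \<union> RB i j)"
    using M.regsets_c[OF reg_union.hyps(1)] M.regsets_c[OF reg_union.hyps(2)] by (intro rep_union)
  then show ?case by blast
next
  case (reg_mul A B)
  then obtain RA RB where "rep A RA" "rep B RB" by blast
  then have "rep (setmul MK A B) (\<lambda>i j. \<Union>k<n. setmul D (RA i k) (RB k j))"
    using M.regsets_c[OF reg_mul.hyps(1)] M.regsets_c[OF reg_mul.hyps(2)] by (intro rep_mul)
  then show ?case by blast
next
  case (reg_star A)
  then obtain R where "rep A R" by blast
  then have "rep (setstar MK A) (W R)"
    using M.regsets_c[OF reg_star.hyps(1)] by (intro rep_star)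
  then show ?case by blast
qed

lemma Mat_sup_reg: "A \<in> regsets MK \<Longrightarrow> \<exists>R. rep A R \<and> dsup MK A = supmat R \<and> is_sup MK A (supmat R)"
proof -
  assume A: "A \<in> regsets MK"
  then obtain R where r: "rep A R" using rep_reg by blast
  have "is_sup MK A (supmat R)" using rep_sup[OF M.regsets_c[OF A] r] .
  then show ?thesis using r M.dsup_eq by blast
qed

lemma Mat_R_dioid: "R_dioid MK"
  unfolding R_dioid_def
proof (intro conjI ballI)
  show "is_dioid MK" by (rule M.isd)
  fix A assume A: "A \<in> regsets MK"
  show "\<exists>s. is_sup MK A s" using Mat_sup_reg[OF A] by blast
  fix B assume B: "B \<in> regsets MK"
  obtain RA where ra: "rep A RA" "dsup MK A = supmat RA" using Mat_sup_reg[OF A] by blast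
  obtain RB where rb: "rep B RB" "dsup MK B = supmat RB" using Mat_sup_reg[OF B] by blast
  have Ac: "A \<subseteq> dcar MK" and Bc: "B \<subseteq> dcar MK" using A B M.regsets_c by auto
  let ?R = "\<lambda>i j. \<Union>k<n. setmul D (RA i k) (RB k j)"
  have rab: "rep (setmul MK A B) ?R" by (rule rep_mul[OF Ac Bc ra(1) rb(1)])
  have "dsup MK (setmul MK A B) = supmat ?R"
    using rep_sup[OF M.setmul_c[OF Ac Bc] rab] by (rule M.dsup_eq)
  also have "\<dots> = dmul MK (supmat RA) (supmat RB)"
  proof (rule Mat_eqI[where n=n and K=D])
    have r1: "\<And>i j. RA i j \<in> regsets D" and r2: "\<And>i j. RB i j \<in> regsets D"
      using ra rb by (auto intro: rep_regD)
    show "supmat ?R \<in> dcar MK" using rab by (intro supmat_c rep_regD)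
    show "dmul MK (supmat RA) (supmat RB) \<in> dcar MK" using r1 r2 by (intro M.mul_c supmat_c)
    fix i j assume ij: "i < n" "j < n"
    have "supmat ?R i j = dsup D (?R i j)" using ij by (simp add: supmat_def)
    also have "\<dots> = dsum D (\<lambda>k. dmul D (dsup D (RA i k)) (dsup D (RB k j))) n"
      by (rule sup_mulset[OF r1 r2])
    also have "\<dots> = dmul MK (supmat RA) (supmat RB) i j"
      using ij by (simp add: Mat_mul_ij supmat_def cong: dsum_cong)
    finally show "supmat ?R i j = dmul MK (supmat RA) (supmat RB) i j" .
  qed
  finally show "dsup MK (setmul MK A B) = dmul MK (dsup MK A) (dsup MK B)" using ra rb by simp
qed

end

lemma morD:
  assumes "R_morphism D E f"
  shows mor_c: "a \<in> dcar D \<Longrightarrow> f a \<in> dcar E"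
    and mor_0: "f (dzero D) = dzero E"
    and mor_1: "f (dunit D) = dunit E"
    and mor_add: "a \<in> dcar D \<Longrightarrow> b \<in> dcar D \<Longrightarrow> f (dadd D a b) = dadd E (f a) (f b)"
    and mor_mul: "a \<in> dcar D \<Longrightarrow> b \<in> dcar D \<Longrightarrow> f (dmul D a b) = dmul E (f a) (f b)"
    and mor_sup: "A \<in> regsets D \<Longrightarrow> f (dsup D A) = dsup E (f ` A)"
  using assms unfolding R_morphism_def by blast+

context dioid
begin

lemma mor_dsum: "R_morphism D E f \<Longrightarrow> (\<And>k. k < m \<Longrightarrow> F k \<in> dcar D) \<Longrightarrow>
  f (dsum D F m) = dsum E (\<lambda>k. f (F k)) m"
proof (induction m)
  case 0 then show ?case by (simp add: mor_0)
next
  case (Suc m)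
  have "f (dsum D F (Suc m)) = dadd E (f (dsum D F m)) (f (F m))"
    using Suc.prems by (simp add: mor_add)
  then show ?case using Suc by simp
qed

lemma mor_mono: "R_morphism D E f \<Longrightarrow> a \<in> dcar D \<Longrightarrow> b \<in> dcar D \<Longrightarrow> le a b \<Longrightarrow> dleq E (f a) (f b)"
  unfolding dleq_def by (metis mor_add)

lemma setpow_image: "R_morphism D E f \<Longrightarrow> A \<subseteq> dcar D \<Longrightarrow> f ` setpow D A k = setpow E (f ` A) k"
proof (induction k)
  case 0 then show ?case by (simp add: mor_1)
next
  case (Suc k)
  have c: "setpow D A k \<subseteq> dcar D" using setpow_c Suc.prems by blast
  show ?case
  proof
    show "f ` setpow D A (Suc k) \<subseteq> setpow E (f ` A) (Suc k)"
    proof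
      fix z assume "z \<in> f ` setpow D A (Suc k)"
      then obtain a b where ab: "z = f (dmul D a b)" "a \<in> A" "b \<in> setpow D A k"
        unfolding setpow.simps setmul_def by blast
      then have "z = dmul E (f a) (f b)" using c Suc.prems by (simp add: mor_mul subset_iff)
      moreover have "f b \<in> setpow E (f ` A) k" using Suc ab by blast
      ultimately show "z \<in> setpow E (f ` A) (Suc k)" unfolding setpow.simps setmul_def using ab by blast
    qed
    show "setpow E (f ` A) (Suc k) \<subseteq> f ` setpow D A (Suc k)"
    proof
      fix z assume "z \<in> setpow E (f ` A) (Suc k)"
      then obtain a b where ab: "z = dmul E a b" "a \<in> f ` A" "b \<in> setpow E (f ` A) k"
        unfolding setpow.simps setmul_def by blast
      then obtain a' b' where a': "a = f a'" "a' \<in> A" and b': "b = f b'" "b' \<in> setpow D A k"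
        using Suc by blast
      then have "z = f (dmul D a' b')" using ab c Suc.prems by (simp add: mor_mul subset_iff)
      moreover have "dmul D a' b' \<in> setpow D A (Suc k)" unfolding setpow.simps setmul_iff using a' b' by blast
      ultimately show "z \<in> f ` setpow D A (Suc k)" by blast
    qed
  qed
qed

lemma regsets_image:
  assumes fm: "R_morphism D E f"
  shows "X \<in> regsets D \<Longrightarrow> f ` X \<in> regsets E"
proof (induction X rule: regsets.induct)
  case reg_empty then show ?case by (simp add: regsets.reg_empty)
next
  case (reg_single a) then show ?case using mor_c[OF fm] by (simp add: regsets.reg_single)
next
  case (reg_union A B) then show ?case by (simp add: image_Un regsets.reg_union)
next
  case (reg_mul A B)
  have "f ` setmul D A B = setmul E (f ` A) (f ` B)"
  proof
    show "f ` setmul D A B \<subseteq> setmul E (f ` A) (f ` B)"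
    proof
      fix z assume "z \<in> f ` setmul D A B"
      then obtain a b where ab: "z = f (dmul D a b)" "a \<in> A" "b \<in> B" unfolding setmul_def by blast
      then have "z = dmul E (f a) (f b)" using regsets_c[OF reg_mul.hyps(1)] regsets_c[OF reg_mul.hyps(2)]
        by (simp add: mor_mul[OF fm] subset_iff)
      then show "z \<in> setmul E (f ` A) (f ` B)" using ab unfolding setmul_def by blast
    qed
    show "setmul E (f ` A) (f ` B) \<subseteq> f ` setmul D A B"
    proof
      fix z assume "z \<in> setmul E (f ` A) (f ` B)"
      then obtain a b where ab: "z = dmul E (f a) (f b)" "a \<in> A" "b \<in> B" unfolding setmul_def by blast
      then have "z = f (dmul D a b)" using regsets_c[OF reg_mul.hyps(1)] regsets_c[OF reg_mul.hyps(2)]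
        by (simp add: mor_mul[OF fm] subset_iff)
      moreover have "dmul D a b \<in> setmul D A B" using ab unfolding setmul_iff by blast
      ultimately show "z \<in> f ` setmul D A B" by blast
    qed
  qed
  then show ?case using reg_mul.IH by (simp add: regsets.reg_mul)
next
  case (reg_star A)
  have "f ` setstar D A = setstar E (f ` A)"
    unfolding setstar_def image_UN using setpow_image[OF fm regsets_c[OF reg_star.hyps]] by simp
  then show ?case using reg_star.IH by (simp add: regsets.reg_star)
qed

end

lemma Bool_simps: "dcar Bool_dioid = UNIV" "dadd Bool_dioid = (\<or>)" "dmul Bool_dioid = (\<and>)"
  "dzero Bool_dioid = False" "dunit Bool_dioid = True"
  by (simp_all add: Bool_dioid_def)

lemma Bool_is_dioid: "is_dioid Bool_dioid"
  unfolding is_dioid_def Bool_simps by auto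

interpretation B: dioid Bool_dioid by (rule dioid.intro, rule Bool_is_dioid)
interpretation MB: dioid "Mat n Bool_dioid" for n by (rule dioid.intro, rule B.Mat_dioid)

lemma Bool_dsum: "dsum Bool_dioid f m = (\<exists>k<m. f k)"
  by (induction m) (auto simp: Bool_simps less_Suc_eq)

context dioid
begin

lemma Mat_le_iff': "M \<in> dcar (Mat n D) \<Longrightarrow> N \<in> dcar (Mat n D) \<Longrightarrow>
  dleq (Mat n D) M N \<longleftrightarrow> (\<forall>i<n. \<forall>j<n. le (M i j) (N i j))"
proof
  assume M: "M \<in> dcar (Mat n D)" and N: "N \<in> dcar (Mat n D)" and h: "dleq (Mat n D) M N"
  show "\<forall>i<n. \<forall>j<n. le (M i j) (N i j)"
  proof (intro allI impI)
    fix i j assume ij: "i < n" "j < n"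
    have "dadd (Mat n D) M N i j = N i j" using h unfolding dleq_def by simp
    then show "le (M i j) (N i j)" using ij unfolding dleq_def by (simp add: Mat_add_ij)
  qed
next
  assume M: "M \<in> dcar (Mat n D)" and N: "N \<in> dcar (Mat n D)" and h: "\<forall>i<n. \<forall>j<n. le (M i j) (N i j)"
  show "dleq (Mat n D) M N" unfolding dleq_def
  proof (rule Mat_eqI[where n=n and K=D])
    show "dadd (Mat n D) M N \<in> dcar (Mat n D)" using M N by (rule Mat_add_c)
    show "N \<in> dcar (Mat n D)" by fact
    fix i j assume ij: "i < n" "j < n"
    then show "dadd (Mat n D) M N i j = N i j" using h unfolding dleq_def by (simp add: Mat_add_ij)
  qed
qed

end


abbreviation MB where "MB n \<equiv> Mat n Bool_dioid"

lemma MB_car: "M \<in> dcar (MB n) \<longleftrightarrow> (\<forall>i j. \<not> (i < n \<and> j < n) \<longrightarrow> \<not> M i j)"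
  by (simp add: Mat_simps Bool_simps)

context mat_l
begin

lemma scalar_ij: "scalar_mat n D a i j = (if i = j \<and> i < n then a else dzero D)"
  by (simp add: scalar_mat_def)
lemma boolm_ij: "bool_mat n D B i j = (if i < n \<and> j < n \<and> B i j then dunit D else dzero D)"
  by (simp add: bool_mat_def)

lemma scalar_c: "a \<in> dcar D \<Longrightarrow> scalar_mat n D a \<in> dcar MK"
  by (rule Mat_carI) (auto simp: scalar_ij)
lemma boolm_c: "bool_mat n D B \<in> dcar MK"
  by (rule Mat_carI) (auto simp: boolm_ij)

lemma scalar_mul_entry:
  assumes ij: "i < n" "j < n" and x: "x \<in> dcar D" and N: "N \<in> dcar MK"
  shows "dmul MK (scalar_mat n D x) N i j = dmul D x (N i j)"
proof -
  have "dmul MK (scalar_mat n D x) N i j = dsum D (\<lambda>k. if i = k then dmul D x (N k j) else dzero D) n"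
    using ij x N by (auto simp: Mat_mul_ij scalar_ij Mat_carD intro: dsum_cong)
  also have "\<dots> = dmul D x (N i j)" using ij x N by (simp add: dsum_delta' Mat_carD)
  finally show ?thesis .
qed

lemma mul_scalar_entry:
  assumes ij: "i < n" "j < n" and x: "x \<in> dcar D" and N: "N \<in> dcar MK"
  shows "dmul MK N (scalar_mat n D x) i j = dmul D (N i j) x"
proof -
  have "dmul MK N (scalar_mat n D x) i j = dsum D (\<lambda>k. if k = j then dmul D (N i k) x else dzero D) n"
    using ij x N by (auto simp: Mat_mul_ij scalar_ij Mat_carD intro: dsum_cong)
  also have "\<dots> = dmul D (N i j) x" using ij x N by (simp add: dsum_delta Mat_carD)
  finally show ?thesis .
qed

lemma scalar_mor: "R_morphism D MK (scalar_mat n D)"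
  unfolding R_morphism_def
proof (intro conjI ballI)
  fix a assume a: "a \<in> dcar D"
  show "scalar_mat n D a \<in> dcar MK" using a by (rule scalar_c)
next
  show "scalar_mat n D (dzero D) = dzero MK" by (auto simp: scalar_mat_def Mat_simps)
  show "scalar_mat n D (dunit D) = dunit MK" by (auto simp: scalar_mat_def Mat_simps)
next
  fix a b assume a: "a \<in> dcar D" and b: "b \<in> dcar D"
  show "scalar_mat n D (dadd D a b) = dadd MK (scalar_mat n D a) (scalar_mat n D b)"
    using a b by (intro ext) (auto simp: scalar_mat_def Mat_simps)
  show "scalar_mat n D (dmul D a b) = dmul MK (scalar_mat n D a) (scalar_mat n D b)"
  proof (rule Mat_eqI[where n=n and K=D])
    show "scalar_mat n D (dmul D a b) \<in> dcar MK" using a b by (simp add: scalar_c)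
    show "dmul MK (scalar_mat n D a) (scalar_mat n D b) \<in> dcar MK" using a b by (simp add: scalar_c)
    fix i j assume ij: "i < n" "j < n"
    then show "scalar_mat n D (dmul D a b) i j = dmul MK (scalar_mat n D a) (scalar_mat n D b) i j"
      using a b by (simp add: scalar_mul_entry scalar_c scalar_ij)
  qed
next
  fix A assume A: "A \<in> regsets D"
  have Ac: "A \<subseteq> dcar D" using A by (rule regsets_c)
  have sA: "is_sup D A (dsup D A)" using A by (rule sup_reg)
  have sc: "dsup D A \<in> dcar D" using sA by (rule is_sup_car)
  have "is_sup MK (scalar_mat n D ` A) (scalar_mat n D (dsup D A))"
    unfolding is_sup_def
  proof (intro conjI ballI impI)
    show "scalar_mat n D (dsup D A) \<in> dcar MK" using sc by (rule scalar_c)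
    fix M assume "M \<in> scalar_mat n D ` A"
    then obtain a where a: "a \<in> A" "M = scalar_mat n D a" by blast
    have "le a (dsup D A)" using sA a(1) by (rule is_sup_upper)
    then show "dleq MK M (scalar_mat n D (dsup D A))"
      using a Ac sc by (subst Mat_le_iff) (auto simp: scalar_c scalar_ij subset_iff)
  next
    fix U assume U: "U \<in> dcar MK" and ub: "\<forall>M\<in>scalar_mat n D ` A. dleq MK M U"
    have "le (dsup D A) (U i i)" if i: "i < n" for i
    proof (rule is_sup_least[OF sA])
      show "U i i \<in> dcar D" using U i by (simp add: Mat_carD)
      fix a assume a: "a \<in> A"
      then have "dleq MK (scalar_mat n D a) U" using ub by blast
      then have h: "\<forall>i<n. \<forall>j<n. le (scalar_mat n D a i j) (U i j)"
        using a Ac U Mat_le_iff[of "scalar_mat n D a" U] scalar_c[of a] by blast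
      show "le a (U i i)" using h[rule_format, OF i i] i by (simp add: scalar_ij)
    qed
    then show "dleq MK (scalar_mat n D (dsup D A)) U"
      using U sc by (subst Mat_le_iff) (auto simp: scalar_c scalar_ij Mat_carD)
  qed
  then show "scalar_mat n D (dsup D A) = dsup MK (scalar_mat n D ` A)" by (simp add: M.dsup_eq)
qed

lemma MB_sup:
  assumes A: "A \<subseteq> dcar (MB n)"
  shows "is_sup (MB n) A (\<lambda>i j. i < n \<and> j < n \<and> (\<exists>M\<in>A. M i j))"
  unfolding is_sup_def
proof (intro conjI ballI impI)
  show "(\<lambda>i j. i < n \<and> j < n \<and> (\<exists>M\<in>A. M i j)) \<in> dcar (MB n)" unfolding MB_car by blast
  fix M assume M: "M \<in> A"
  then show "dleq (MB n) M (\<lambda>i j. i < n \<and> j < n \<and> (\<exists>M\<in>A. M i j))"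
    using A by (subst B.Mat_le_iff') (auto simp: MB_car dleq_def Bool_simps)
next
  fix U assume U: "U \<in> dcar (MB n)" and ub: "\<forall>M\<in>A. dleq (MB n) M U"
  have "\<And>M i j. M \<in> A \<Longrightarrow> i < n \<Longrightarrow> j < n \<Longrightarrow> M i j \<Longrightarrow> U i j"
  proof -
    fix M i j assume "M \<in> A" "i < n" "j < n" "M i j"
    then show "U i j" using ub A U B.Mat_le_iff'[of M n U] by (auto simp: dleq_def Bool_simps)
  qed
  then show "dleq (MB n) (\<lambda>i j. i < n \<and> j < n \<and> (\<exists>M\<in>A. M i j)) U"
    using U by (subst B.Mat_le_iff') (auto simp: MB_car dleq_def Bool_simps)
qed

lemma boolm_mor: "R_morphism (MB n) MK (bool_mat n D)"
  unfolding R_morphism_def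
proof (intro conjI ballI)
  fix a :: "nat \<Rightarrow> nat \<Rightarrow> bool"
  show "bool_mat n D a \<in> dcar MK" by (rule boolm_c)
next
  show "bool_mat n D (dzero (MB n)) = dzero MK" by (auto simp: bool_mat_def Mat_simps Bool_simps)
  show "bool_mat n D (dunit (MB n)) = dunit MK" unfolding bool_mat_def Mat_simps Bool_simps by (intro ext) auto
next
  fix a b assume a: "a \<in> dcar (MB n)" and b: "b \<in> dcar (MB n)"
  show "bool_mat n D (dadd (MB n) a b) = dadd MK (bool_mat n D a) (bool_mat n D b)"
    by (intro ext) (auto simp: bool_mat_def Mat_simps Bool_simps)
  show "bool_mat n D (dmul (MB n) a b) = dmul MK (bool_mat n D a) (bool_mat n D b)"
  proof (rule Mat_eqI[where n=n and K=D])
    show "bool_mat n D (dmul (MB n) a b) \<in> dcar MK" by (rule boolm_c)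
    show "dmul MK (bool_mat n D a) (bool_mat n D b) \<in> dcar MK" by (intro M.mul_c boolm_c)
    fix i j assume ij: "i < n" "j < n"
    have "dmul MK (bool_mat n D a) (bool_mat n D b) i j
       = dsum D (\<lambda>k. if a i k \<and> b k j then dunit D else dzero D) n"
      using ij by (auto simp: Mat_mul_ij boolm_ij intro: dsum_cong)
    also have "\<dots> = bool_mat n D (dmul (MB n) a b) i j"
      using ij by (simp add: dsum_ind boolm_ij Mat_mul_ij Bool_dsum Bool_simps)
    finally show "bool_mat n D (dmul (MB n) a b) i j = dmul MK (bool_mat n D a) (bool_mat n D b) i j" ..
  qed
next
  fix A assume A: "A \<in> regsets (MB n)"
  have Ac: "A \<subseteq> dcar (MB n)" using A by (rule MB.regsets_c)
  let ?S = "\<lambda>i j. i < n \<and> j < n \<and> (\<exists>M\<in>A. M i j)"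
  have "dsup (MB n) A = ?S" using MB_sup[OF Ac] by (rule MB.dsup_eq)
  moreover have "is_sup MK (bool_mat n D ` A) (bool_mat n D ?S)"
    unfolding is_sup_def
  proof (intro conjI ballI impI)
    show "bool_mat n D ?S \<in> dcar MK" by (rule boolm_c)
    fix M assume "M \<in> bool_mat n D ` A"
    then obtain N where N: "N \<in> A" "M = bool_mat n D N" by blast
    show "dleq MK M (bool_mat n D ?S)"
      using N by (subst Mat_le_iff) (auto simp: boolm_c boolm_ij)
  next
    fix U assume U: "U \<in> dcar MK" and ub: "\<forall>M\<in>bool_mat n D ` A. dleq MK M U"
    have "le (dunit D) (U i j)" if ij: "i < n" "j < n" and N: "N \<in> A" "N i j" for i j N
    proof -
      have "dleq MK (bool_mat n D N) U" using ub N by blast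
      then have h: "\<forall>i<n. \<forall>j<n. le (bool_mat n D N i j) (U i j)"
        using U Mat_le_iff[of "bool_mat n D N" U] boolm_c[of N] by blast
      show ?thesis using h[rule_format, OF ij] ij N by (simp add: boolm_ij)
    qed
    then show "dleq MK (bool_mat n D ?S) U"
      using U by (subst Mat_le_iff) (auto simp: boolm_c boolm_ij Mat_carD)
  qed
  ultimately show "bool_mat n D (dsup (MB n) A) = dsup MK (bool_mat n D ` A)"
    by (simp add: M.dsup_eq)
qed

lemma commute:
  assumes x: "x \<in> dcar D"
  shows "dmul MK (scalar_mat n D x) (bool_mat n D y) = dmul MK (bool_mat n D y) (scalar_mat n D x)"
proof (rule Mat_eqI[where n=n and K=D])
  show "dmul MK (scalar_mat n D x) (bool_mat n D y) \<in> dcar MK" using x by (intro M.mul_c scalar_c boolm_c)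
  show "dmul MK (bool_mat n D y) (scalar_mat n D x) \<in> dcar MK" using x by (intro M.mul_c scalar_c boolm_c)
  fix i j assume ij: "i < n" "j < n"
  then show "dmul MK (scalar_mat n D x) (bool_mat n D y) i j = dmul MK (bool_mat n D y) (scalar_mat n D x) i j"
    using x by (simp add: scalar_mul_entry mul_scalar_entry boolm_c boolm_ij)
qed

end

context dioid
begin

lemma dsum_prod2:
  assumes X: "\<And>i j. i < n \<Longrightarrow> j < n \<Longrightarrow> X i j \<in> dcar D"
    and Y: "\<And>i j. i < n \<Longrightarrow> j < n \<Longrightarrow> Y i j \<in> dcar D"
  shows "dmul D (dsum D (\<lambda>i. dsum D (\<lambda>j. X i j) n) n) (dsum D (\<lambda>k. dsum D (\<lambda>l. Y k l) n) n)
    = dsum D (\<lambda>i. dsum D (\<lambda>j. dsum D (\<lambda>k. dsum D (\<lambda>l. dmul D (X i j) (Y k l)) n) n) n) n"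
proof -
  let ?Y = "dsum D (\<lambda>k. dsum D (\<lambda>l. Y k l) n) n"
  have Yc: "?Y \<in> dcar D" using Y by simp
  have "dmul D (dsum D (\<lambda>i. dsum D (\<lambda>j. X i j) n) n) ?Y
      = dsum D (\<lambda>i. dmul D (dsum D (\<lambda>j. X i j) n) ?Y) n"
    using X Yc by (intro dsum_mul_r) auto
  also have "\<dots> = dsum D (\<lambda>i. dsum D (\<lambda>j. dmul D (X i j) ?Y) n) n"
    using X Yc by (intro dsum_cong dsum_mul_r) auto
  also have "\<dots> = dsum D (\<lambda>i. dsum D (\<lambda>j. dsum D (\<lambda>k. dmul D (X i j) (dsum D (\<lambda>l. Y k l) n)) n) n) n"
    using X Y by (intro dsum_cong dsum_mul_l) auto
  also have "\<dots> = dsum D (\<lambda>i. dsum D (\<lambda>j. dsum D (\<lambda>k. dsum D (\<lambda>l. dmul D (X i j) (Y k l)) n) n) n) n"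
    using X Y by (intro dsum_cong dsum_mul_l) auto
  finally show ?thesis .
qed

lemma dsum_if_const: "(if P then dsum D F m else dzero D) = dsum D (\<lambda>l. if P then F l else dzero D) m"
  by (cases P) simp_all

end

locale univ = mat_l D n + E: rdioid E
  for D :: "'a dioid_struct" and n :: nat and E :: "'c dioid_struct" +
  fixes f :: "'a \<Rightarrow> 'c" and g :: "(nat \<Rightarrow> nat \<Rightarrow> bool) \<Rightarrow> 'c"
  assumes fm: "R_morphism D E f" and gm: "R_morphism (MB n) E g"
    and cm: "\<And>x y. x \<in> dcar D \<Longrightarrow> y \<in> dcar (MB n) \<Longrightarrow> dmul E (f x) (g y) = dmul E (g y) (f x)"
begin

definition ee :: "nat \<Rightarrow> nat \<Rightarrow> nat \<Rightarrow> nat \<Rightarrow> bool" where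
  "ee i j = (\<lambda>a b. a = i \<and> b = j)"

definition h :: "(nat \<Rightarrow> nat \<Rightarrow> 'a) \<Rightarrow> 'c" where
  "h M = dsum E (\<lambda>i. dsum E (\<lambda>j. dmul E (f (M i j)) (g (ee i j))) n) n"

lemma ee_c: "i < n \<Longrightarrow> j < n \<Longrightarrow> ee i j \<in> dcar (MB n)"
  by (auto simp: MB_car ee_def)

lemma gee_c: "i < n \<Longrightarrow> j < n \<Longrightarrow> g (ee i j) \<in> dcar E"
  using ee_c mor_c[OF gm] by blast

lemma f_c: "x \<in> dcar D \<Longrightarrow> f x \<in> dcar E"
  using mor_c[OF fm] by blast

lemma h_term_c: "M \<in> dcar MK \<Longrightarrow> i < n \<Longrightarrow> j < n \<Longrightarrow> dmul E (f (M i j)) (g (ee i j)) \<in> dcar E"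
  by (simp add: f_c gee_c Mat_carD)

lemma h_c: "M \<in> dcar MK \<Longrightarrow> h M \<in> dcar E"
  unfolding h_def by (simp add: h_term_c)

lemma ee_mul: "i < n \<Longrightarrow> j < n \<Longrightarrow> k < n \<Longrightarrow> l < n \<Longrightarrow>
  dmul (MB n) (ee i j) (ee k l) = (if j = k then ee i l else dzero (MB n))"
  by (intro ext) (auto simp: Mat_simps Bool_simps Bool_dsum ee_def)

lemma MB_one: "dunit (MB n) = dsum (MB n) (\<lambda>i. ee i i) n"
  by (intro ext) (auto simp: Mat_simps Bool_simps Bool_dsum ee_def Mat_dsum_ij)

lemma MB_decomp: "B \<in> dcar (MB n) \<Longrightarrow>
  B = dsum (MB n) (\<lambda>i. dsum (MB n) (\<lambda>j. if B i j then ee i j else dzero (MB n)) n) n"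
  by (intro ext) (auto simp: MB_car Mat_simps Bool_simps Bool_dsum ee_def Mat_dsum_ij)

lemma g_dsum: "(\<And>k. k < m \<Longrightarrow> F k \<in> dcar (MB n)) \<Longrightarrow> g (dsum (MB n) F m) = dsum E (\<lambda>k. g (F k)) m"
  by (rule MB.mor_dsum[OF gm])

lemma f_dsum: "(\<And>k. k < m \<Longrightarrow> F k \<in> dcar D) \<Longrightarrow> f (dsum D F m) = dsum E (\<lambda>k. f (F k)) m"
  by (rule mor_dsum[OF fm])

lemma sum_gee: "dsum E (\<lambda>i. g (ee i i)) n = dunit E"
proof -
  have "dsum E (\<lambda>i. g (ee i i)) n = g (dsum (MB n) (\<lambda>i. ee i i) n)"
    by (rule g_dsum[symmetric]) (simp add: ee_c)
  also have "\<dots> = g (dunit (MB n))" by (simp add: MB_one)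
  also have "\<dots> = dunit E" by (rule mor_1[OF gm])
  finally show ?thesis .
qed

lemma h_scalar: "x \<in> dcar D \<Longrightarrow> h (scalar_mat n D x) = f x"
proof -
  assume x: "x \<in> dcar D"
  have "h (scalar_mat n D x) = dsum E (\<lambda>i. dsum E (\<lambda>j. if i = j then dmul E (f x) (g (ee i j)) else dzero E) n) n"
    unfolding h_def using x
    by (intro E.dsum_cong) (auto simp: scalar_ij mor_0[OF fm] gee_c)
  also have "\<dots> = dsum E (\<lambda>i. dmul E (f x) (g (ee i i))) n"
    using x by (intro E.dsum_cong) (simp add: E.dsum_delta' f_c gee_c)
  also have "\<dots> = dmul E (f x) (dsum E (\<lambda>i. g (ee i i)) n)"
    using x by (intro E.dsum_mul_l[symmetric]) (auto simp: f_c gee_c)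
  also have "\<dots> = f x" using x by (simp add: sum_gee f_c)
  finally show ?thesis .
qed

lemma h_one: "h (dunit MK) = dunit E"
proof -
  have "dunit MK = scalar_mat n D (dunit D)" by (auto simp: scalar_mat_def Mat_simps)
  then show ?thesis using h_scalar[of "dunit D"] mor_1[OF fm] by simp
qed

lemma h_zero: "h (dzero MK) = dzero E"
  unfolding h_def by (simp add: Mat_simps mor_0[OF fm] gee_c cong: E.dsum_cong)

lemma h_bool: "B \<in> dcar (MB n) \<Longrightarrow> h (bool_mat n D B) = g B"
proof -
  assume B: "B \<in> dcar (MB n)"
  have c: "\<And>i j. i < n \<Longrightarrow> j < n \<Longrightarrow> (if B i j then ee i j else dzero (MB n)) \<in> dcar (MB n)"
    by (simp add: ee_c)
  have "h (bool_mat n D B) = dsum E (\<lambda>i. dsum E (\<lambda>j. g (if B i j then ee i j else dzero (MB n))) n) n"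
    unfolding h_def
    by (intro dsum_cong E.dsum_cong) (auto simp: boolm_ij mor_0[OF fm] mor_1[OF fm] mor_0[OF gm] gee_c)
  also have "\<dots> = dsum E (\<lambda>i. g (dsum (MB n) (\<lambda>j. if B i j then ee i j else dzero (MB n)) n)) n"
    using c by (intro E.dsum_cong g_dsum[symmetric]) auto
  also have "\<dots> = g (dsum (MB n) (\<lambda>i. dsum (MB n) (\<lambda>j. if B i j then ee i j else dzero (MB n)) n) n)"
    using c by (intro g_dsum[symmetric] MB.dsum_c) auto
  also have "\<dots> = g B" using MB_decomp[OF B] by simp
  finally show ?thesis .
qed

lemma h_add: "M \<in> dcar MK \<Longrightarrow> N \<in> dcar MK \<Longrightarrow> h (dadd MK M N) = dadd E (h M) (h N)"
proof -
  assume M: "M \<in> dcar MK" and N: "N \<in> dcar MK"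
  have "h (dadd MK M N) = dsum E (\<lambda>i. dsum E (\<lambda>j. dadd E (dmul E (f (M i j)) (g (ee i j)))
          (dmul E (f (N i j)) (g (ee i j)))) n) n"
    unfolding h_def using M N
    by (intro E.dsum_cong) (auto simp: Mat_add_ij mor_add[OF fm] Mat_carD E.distr f_c gee_c)
  also have "\<dots> = dsum E (\<lambda>i. dadd E (dsum E (\<lambda>j. dmul E (f (M i j)) (g (ee i j))) n)
          (dsum E (\<lambda>j. dmul E (f (N i j)) (g (ee i j))) n)) n"
    using M N by (intro E.dsum_cong E.dsum_add) (auto simp: h_term_c)
  also have "\<dots> = dadd E (h M) (h N)"
    unfolding h_def using M N by (intro E.dsum_add) (auto simp: h_term_c)
  finally show ?thesis .
qed

lemma term_prod:
  assumes M: "M \<in> dcar MK" and N: "N \<in> dcar MK" and ijkl: "i < n" "j < n" "k < n" "l < n"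
  shows "dmul E (dmul E (f (M i j)) (g (ee i j))) (dmul E (f (N k l)) (g (ee k l)))
    = (if k = j then dmul E (f (dmul D (M i j) (N j l))) (g (ee i l)) else dzero E)"
proof -
  have a: "f (M i j) \<in> dcar E" and b: "f (N k l) \<in> dcar E" using M N ijkl by (auto simp: f_c Mat_carD)
  have c: "g (ee i j) \<in> dcar E" and c': "g (ee k l) \<in> dcar E" using ijkl by (auto simp: gee_c)
  have cb: "dmul E (g (ee i j)) (f (N k l)) = dmul E (f (N k l)) (g (ee i j))"
    using cm[of "N k l" "ee i j"] N ijkl by (simp add: Mat_carD ee_c)
  have "dmul E (dmul E (f (M i j)) (g (ee i j))) (dmul E (f (N k l)) (g (ee k l)))
     = dmul E (f (M i j)) (dmul E (dmul E (g (ee i j)) (f (N k l))) (g (ee k l)))"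
    using a b c c' by (simp add: E.mul_assoc)
  also have "\<dots> = dmul E (f (M i j)) (dmul E (dmul E (f (N k l)) (g (ee i j))) (g (ee k l)))"
    by (simp add: cb)
  also have "\<dots> = dmul E (dmul E (f (M i j)) (f (N k l))) (dmul E (g (ee i j)) (g (ee k l)))"
    using a b c c' by (simp add: E.mul_assoc)
  also have "\<dots> = dmul E (f (dmul D (M i j) (N k l))) (g (dmul (MB n) (ee i j) (ee k l)))"
    using M N ijkl by (simp add: mor_mul[OF fm] mor_mul[OF gm] Mat_carD ee_c)
  also have "\<dots> = (if k = j then dmul E (f (dmul D (M i j) (N j l))) (g (ee i l)) else dzero E)"
    using M N ijkl by (auto simp: ee_mul mor_0[OF gm] f_c Mat_carD)
  finally show ?thesis .
qed

lemma h_mul: "M \<in> dcar MK \<Longrightarrow> N \<in> dcar MK \<Longrightarrow> h (dmul MK M N) = dmul E (h M) (h N)"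
proof -
  assume M: "M \<in> dcar MK" and N: "N \<in> dcar MK"
  let ?X = "\<lambda>i l j. dmul E (f (dmul D (M i j) (N j l))) (g (ee i l))"
  have Xc: "\<And>i l j. i < n \<Longrightarrow> l < n \<Longrightarrow> j < n \<Longrightarrow> ?X i l j \<in> dcar E"
    using M N by (simp add: f_c gee_c Mat_carD)
  have "dmul E (h M) (h N) = dsum E (\<lambda>i. dsum E (\<lambda>j. dsum E (\<lambda>k. dsum E (\<lambda>l.
      dmul E (dmul E (f (M i j)) (g (ee i j))) (dmul E (f (N k l)) (g (ee k l)))) n) n) n) n"
    unfolding h_def using M N by (intro E.dsum_prod2) (auto simp: h_term_c)
  also have "\<dots> = dsum E (\<lambda>i. dsum E (\<lambda>j. dsum E (\<lambda>k. dsum E (\<lambda>l.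
      if k = j then ?X i l j else dzero E) n) n) n) n"
    using M N by (intro E.dsum_cong) (simp add: term_prod)
  also have "\<dots> = dsum E (\<lambda>i. dsum E (\<lambda>j. dsum E (\<lambda>k.
      if k = j then dsum E (\<lambda>l. ?X i l j) n else dzero E) n) n) n"
    by (simp add: E.dsum_if_const)
  also have "\<dots> = dsum E (\<lambda>i. dsum E (\<lambda>j. dsum E (\<lambda>l. ?X i l j) n) n) n"
  proof (rule E.dsum_cong, rule E.dsum_cong)
    fix i j assume ij: "i < n" "j < n"
    have Sc: "dsum E (\<lambda>l. ?X i l j) n \<in> dcar E" using Xc ij by simp
    show "dsum E (\<lambda>k. if k = j then dsum E (\<lambda>l. ?X i l j) n else dzero E) n = dsum E (\<lambda>l. ?X i l j) n"
      using E.dsum_delta[of n "\<lambda>k. dsum E (\<lambda>l. ?X i l j) n" j] Sc ij by simp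
  qed
  also have "\<dots> = dsum E (\<lambda>i. dsum E (\<lambda>l. dsum E (\<lambda>j. ?X i l j) n) n) n"
    using Xc by (intro E.dsum_cong E.dsum_swap) auto
  also have "\<dots> = dsum E (\<lambda>i. dsum E (\<lambda>l. dmul E (f (dmul MK M N i l)) (g (ee i l))) n) n"
  proof (intro E.dsum_cong)
    fix i l assume il: "i < n" "l < n"
    have "dsum E (\<lambda>j. ?X i l j) n = dmul E (dsum E (\<lambda>j. f (dmul D (M i j) (N j l))) n) (g (ee i l))"
      using il M N by (intro E.dsum_mul_r[symmetric]) (auto simp: f_c gee_c Mat_carD)
    also have "\<dots> = dmul E (f (dsum D (\<lambda>j. dmul D (M i j) (N j l)) n)) (g (ee i l))"
      using il M N by (subst f_dsum) (auto simp: Mat_carD)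
    also have "\<dots> = dmul E (f (dmul MK M N i l)) (g (ee i l))" using il by (simp add: Mat_mul_ij)
    finally show "dsum E (\<lambda>j. ?X i l j) n = dmul E (f (dmul MK M N i l)) (g (ee i l))" .
  qed
  also have "\<dots> = h (dmul MK M N)" unfolding h_def ..
  finally show ?thesis by simp
qed

end

context univ
begin

lemma h_mono: "M \<in> dcar MK \<Longrightarrow> N \<in> dcar MK \<Longrightarrow> dleq MK M N \<Longrightarrow> dleq E (h M) (h N)"
proof -
  assume M: "M \<in> dcar MK" and N: "N \<in> dcar MK" and le: "dleq MK M N"
  have "h N = h (dadd MK M N)" using le unfolding dleq_def by simp
  also have "\<dots> = dadd E (h M) (h N)" using M N by (rule h_add)
  finally show ?thesis unfolding dleq_def by simp
qed

lemma term_le_h: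
  assumes M: "M \<in> dcar MK" and ij: "i < n" "j < n"
  shows "dleq E (dmul E (f (M i j)) (g (ee i j))) (h M)"
proof -
  have "dleq E (dmul E (f (M i j)) (g (ee i j))) (dsum E (\<lambda>j. dmul E (f (M i j)) (g (ee i j))) n)"
    using M ij by (intro E.dsum_upper) (auto simp: h_term_c)
  moreover have "dleq E (dsum E (\<lambda>j. dmul E (f (M i j)) (g (ee i j))) n) (h M)"
    unfolding h_def using M ij by (intro E.dsum_upper[where f="\<lambda>i. dsum E (\<lambda>j. dmul E (f (M i j)) (g (ee i j))) n"]) (auto simp: h_term_c)
  moreover have "dsum E (\<lambda>j. dmul E (f (M i j)) (g (ee i j))) n \<in> dcar E" using M ij by (simp add: h_term_c)
  ultimately show ?thesis using E.le_trans h_c[OF M] h_term_c[OF M ij] by blast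
qed

lemma h_sup:
  assumes A: "A \<in> regsets MK"
  shows "h (dsup MK A) = dsup E (h ` A)"
proof -
  obtain R where r: "rep A R" and dA: "dsup MK A = supmat R" and sA: "is_sup MK A (supmat R)"
    using Mat_sup_reg[OF A] by blast
  have Ac: "A \<subseteq> dcar MK" using A by (rule M.regsets_c)
  have Rr: "\<And>i j. R i j \<in> regsets D" using r by (rule rep_regD)
  have Sc: "supmat R \<in> dcar MK" using Rr by (rule supmat_c)
  have "is_sup E (h ` A) (h (supmat R))"
    unfolding is_sup_def
  proof (intro conjI ballI impI)
    show "h (supmat R) \<in> dcar E" using Sc by (rule h_c)
    fix z assume "z \<in> h ` A"
    then obtain M where M: "M \<in> A" "z = h M" by blast
    have "dleq MK M (supmat R)" using sA M(1) by (rule M.is_sup_upper)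
    then show "dleq E z (h (supmat R))" using M Ac Sc h_mono by blast
  next
    fix u assume u: "u \<in> dcar E" and ub: "\<forall>z\<in>h ` A. dleq E z u"
    have "dleq E (dmul E (f (supmat R i j)) (g (ee i j))) u" if ij: "i < n" "j < n" for i j
    proof -
      let ?FR = "f ` R i j" and ?G = "{g (ee i j)}"
      have FRr: "?FR \<in> regsets E" using Rr by (rule regsets_image[OF fm])
      have Gr: "?G \<in> regsets E" using gee_c[OF ij] by (rule regsets.reg_single)
      have gs: "dsup E ?G = g (ee i j)" using gee_c[OF ij] by (intro E.dsup_eq E.is_sup_single)
      have "f (supmat R i j) = dsup E ?FR" using ij Rr by (simp add: supmat_def mor_sup[OF fm])
      then have eq: "dmul E (f (supmat R i j)) (g (ee i j)) = dsup E (setmul E ?FR ?G)"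
        using E.sup_mul[OF FRr Gr] gs by simp
      have "dleq E (dsup E (setmul E ?FR ?G)) u"
      proof (rule E.is_sup_least[OF E.sup_reg[OF regsets.reg_mul[OF FRr Gr]] u])
        fix z assume "z \<in> setmul E ?FR ?G"
        then obtain x where x: "x \<in> R i j" "z = dmul E (f x) (g (ee i j))" unfolding setmul_def by blast
        obtain M where M: "M \<in> A" "le x (M i j)" using rep_lowD[OF r ij x(1)] by blast
        have xc: "x \<in> dcar D" using regsets_c[OF Rr] x by blast
        have Mc: "M \<in> dcar MK" using M Ac by blast
        have Mij: "M i j \<in> dcar D" using Mc ij by (simp add: Mat_carD)
        have "dleq E (f x) (f (M i j))" using mor_mono[OF fm xc Mij M(2)] .
        then have "dleq E z (dmul E (f (M i j)) (g (ee i j)))"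
          unfolding x(2) using xc Mij ij by (intro E.mul_mono_r) (auto simp: f_c gee_c)
        moreover have "dleq E (dmul E (f (M i j)) (g (ee i j))) (h M)" using Mc ij by (rule term_le_h)
        moreover have "dleq E (h M) u" using ub M by blast
        moreover have "z \<in> dcar E" unfolding x(2) using xc ij by (simp add: f_c gee_c)
        ultimately show "dleq E z u" using E.le_trans h_c[OF Mc] h_term_c[OF Mc ij] u by blast
      qed
      then show ?thesis using eq by simp
    qed
    then show "dleq E (h (supmat R)) u"
      unfolding h_def using Sc u by (intro E.dsum_lub) (auto simp: h_term_c)
  qed
  then show ?thesis using dA by (simp add: E.dsup_eq)
qed

lemma h_mor: "R_morphism MK E h"
  unfolding R_morphism_def
  by (simp add: h_c h_zero h_one h_add h_mul h_sup)

lemma MK_decomp: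
  assumes z: "z \<in> dcar MK"
  shows "z = dsum MK (\<lambda>i. dsum MK (\<lambda>j. dmul MK (scalar_mat n D (z i j)) (bool_mat n D (ee i j))) n) n"
proof (rule Mat_eqI[where n=n and K=D])
  have c: "\<And>i j. i < n \<Longrightarrow> j < n \<Longrightarrow> dmul MK (scalar_mat n D (z i j)) (bool_mat n D (ee i j)) \<in> dcar MK"
    using z by (intro M.mul_c scalar_c boolm_c) (simp add: Mat_carD)
  show "z \<in> dcar MK" by fact
  show "dsum MK (\<lambda>i. dsum MK (\<lambda>j. dmul MK (scalar_mat n D (z i j)) (bool_mat n D (ee i j))) n) n \<in> dcar MK"
    using c by simp
  fix a b assume ab: "a < n" "b < n"
  have "dsum MK (\<lambda>i. dsum MK (\<lambda>j. dmul MK (scalar_mat n D (z i j)) (bool_mat n D (ee i j))) n) n a b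
     = dsum D (\<lambda>i. dsum D (\<lambda>j. dmul D (z i j) (if a = i \<and> b = j then dunit D else dzero D)) n) n"
    using ab z by (simp add: Mat_dsum_ij scalar_mul_entry boolm_c boolm_ij ee_def Mat_carD cong: dsum_cong)
  also have "\<dots> = dsum D (\<lambda>i. dsum D (\<lambda>j. if i = a then (if j = b then z i j else dzero D) else dzero D) n) n"
  proof (rule dsum_cong, rule dsum_cong)
    fix i j assume ij: "i < n" "j < n"
    then show "dmul D (z i j) (if a = i \<and> b = j then dunit D else dzero D)
      = (if i = a then (if j = b then z i j else dzero D) else dzero D)"
      using z by (auto simp: Mat_carD)
  qed
  also have "\<dots> = dsum D (\<lambda>i. if i = a then z i b else dzero D) n"
  proof (rule dsum_cong)
    fix i assume i: "i < n"
    show "dsum D (\<lambda>j. if i = a then (if j = b then z i j else dzero D) else dzero D) n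
      = (if i = a then z i b else dzero D)"
      using i ab z by (cases "i = a") (simp_all add: dsum_delta Mat_carD)
  qed
  also have "\<dots> = z a b" using ab z by (simp add: dsum_delta Mat_carD)
  finally show "z a b = dsum MK (\<lambda>i. dsum MK (\<lambda>j. dmul MK (scalar_mat n D (z i j)) (bool_mat n D (ee i j))) n) n a b"
    by simp
qed

lemma h_unique:
  assumes hm: "R_morphism MK E h'" and hf: "\<forall>x\<in>dcar D. h' (scalar_mat n D x) = f x"
    and hg: "\<forall>y\<in>dcar (MB n). h' (bool_mat n D y) = g y" and z: "z \<in> dcar MK"
  shows "h' z = h z"
proof -
  have c: "\<And>i j. i < n \<Longrightarrow> j < n \<Longrightarrow> dmul MK (scalar_mat n D (z i j)) (bool_mat n D (ee i j)) \<in> dcar MK"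
    using z by (intro M.mul_c scalar_c boolm_c) (simp add: Mat_carD)
  have "h' z = h' (dsum MK (\<lambda>i. dsum MK (\<lambda>j. dmul MK (scalar_mat n D (z i j)) (bool_mat n D (ee i j))) n) n)"
    using MK_decomp[OF z] by simp
  also have "\<dots> = dsum E (\<lambda>i. h' (dsum MK (\<lambda>j. dmul MK (scalar_mat n D (z i j)) (bool_mat n D (ee i j))) n)) n"
    using c by (intro M.mor_dsum[OF hm]) simp
  also have "\<dots> = dsum E (\<lambda>i. dsum E (\<lambda>j. h' (dmul MK (scalar_mat n D (z i j)) (bool_mat n D (ee i j)))) n) n"
    using c by (intro E.dsum_cong M.mor_dsum[OF hm]) simp
  also have "\<dots> = h z"
    unfolding h_def
  proof (intro E.dsum_cong)
    fix i j assume ij: "i < n" "j < n"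
    have zc: "z i j \<in> dcar D" using z ij by (simp add: Mat_carD)
    have "h' (dmul MK (scalar_mat n D (z i j)) (bool_mat n D (ee i j)))
        = dmul E (h' (scalar_mat n D (z i j))) (h' (bool_mat n D (ee i j)))"
      using zc by (intro mor_mul[OF hm] scalar_c boolm_c)
    also have "\<dots> = dmul E (f (z i j)) (g (ee i j))" using hf hg zc ee_c[OF ij] by simp
    finally show "h' (dmul MK (scalar_mat n D (z i j)) (bool_mat n D (ee i j))) = dmul E (f (z i j)) (g (ee i j))" .
  qed
  finally show ?thesis .
qed

end

theorem proposition4:
  fixes K :: "'a dioid_struct" and n :: nat
  assumes "R_dioid K" and "n \<ge> 1"
  shows "is_R_tensor K (Mat n Bool_dioid) (Mat n K) (scalar_mat n K) (bool_mat n K)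
           TYPE('c)"
proof -
  have dK: "is_dioid K" using assms(1) unfolding R_dioid_def by blast
  interpret mat_l K n
    by (intro mat_l.intro rdioid.intro dioid.intro rdioid_axioms.intro dK assms(1))
  show ?thesis
    unfolding is_R_tensor_def
  proof (intro conjI allI impI ballI)
    show "R_dioid (Mat n K)" by (rule Mat_R_dioid)
    show "R_morphism K (Mat n K) (scalar_mat n K)" by (rule scalar_mor)
    show "R_morphism (Mat n Bool_dioid) (Mat n K) (bool_mat n K)" by (rule boolm_mor)
  next
    fix x y assume x: "x \<in> dcar K"
    show "dmul (Mat n K) (scalar_mat n K x) (bool_mat n K y) = dmul (Mat n K) (bool_mat n K y) (scalar_mat n K x)"
      using x by (rule commute)
  next
    fix E :: "'c dioid_struct" and f g
    assume H: "R_dioid E \<and> R_morphism K E f \<and> R_morphism (Mat n Bool_dioid) E g \<and>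
       (\<forall>x\<in>dcar K. \<forall>y\<in>dcar (Mat n Bool_dioid). dmul E (f x) (g y) = dmul E (g y) (f x))"
    have dE: "is_dioid E" using H unfolding R_dioid_def by blast
    interpret U: univ K n E f g
      by (intro univ.intro univ_axioms.intro mat_l_axioms rdioid.intro dioid.intro rdioid_axioms.intro dE)
         (use H in auto)
    show "\<exists>h. R_morphism (Mat n K) E h \<and> (\<forall>x\<in>dcar K. h (scalar_mat n K x) = f x) \<and>
             (\<forall>y\<in>dcar (Mat n Bool_dioid). h (bool_mat n K y) = g y) \<and>
             (\<forall>h'. R_morphism (Mat n K) E h' \<and> (\<forall>x\<in>dcar K. h' (scalar_mat n K x) = f x) \<and>
                   (\<forall>y\<in>dcar (Mat n Bool_dioid). h' (bool_mat n K y) = g y) \<longrightarrow>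
                   (\<forall>z\<in>dcar (Mat n K). h' z = h z))"
    proof (intro exI[of _ U.h] conjI ballI allI impI)
      show "R_morphism (Mat n K) E U.h" by (rule U.h_mor)
      fix x assume "x \<in> dcar K" then show "U.h (scalar_mat n K x) = f x" by (rule U.h_scalar)
    next
      fix y assume "y \<in> dcar (Mat n Bool_dioid)" then show "U.h (bool_mat n K y) = g y" by (rule U.h_bool)
    next
      fix h' z
      assume "R_morphism (Mat n K) E h' \<and> (\<forall>x\<in>dcar K. h' (scalar_mat n K x) = f x) \<and>
                   (\<forall>y\<in>dcar (Mat n Bool_dioid). h' (bool_mat n K y) = g y)"
        and "z \<in> dcar (Mat n K)"
      then show "h' z = U.h z" using U.h_unique by blast
    qed
  qed
qed


end
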